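(* Let $R$ be the ring of integers of a nonarchimedean local field $F$ of characteristic not $2$ in which $2$ is a prime element, and assume $R\ne\mathbb{Z}_2$. For any $n\ge 3$, the $R$-lattice $\mathbb{H}^{n-1}\perp\langle 1,-1\rangle$ is primitively $n$-universal. In particular, $u^\ast_R(n) = 2n$ for any $n\ge 3$.
   Context: An $R$-lattice is a finitely generated $R$-submodule of a quadratic space $(V,B)$ over $F$, assumed integral ($B(L,L)\subseteq R$) and nondegenerate. A representation is an $R$-linear map preserving $B$; it is primitive if its image is a direct summand. A lattice is primitively $n$-universal if it primitively represents every $R$-lattice of rank $n$; $u^\ast_R(n)$ is the minimal rank of such a lattice. $\mathbb{H}$ is the binary lattice with Gram matrix $\begin{pmatrix}0&1\\1&0\end{pmatrix}$, $\mathbb{H}^{k}$ the orthogonal sum of $k$ copies, and $\langle a_1,\dots,a_k\rangle$ the lattice with diagonal Gram matrix $\operatorname{diag}(a_1,\dots,a_k)$. *)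

theory Defs
  imports "Jordan_Normal_Form.Determinant"
begin

text \<open>v is a normalized discrete valuation on the field; its value at 0 is irrelevant
 (conventionally infinity) and is never used.\<close>

definition discrete_valuation :: "('a::field \<Rightarrow> int) \<Rightarrow> bool" where
  "discrete_valuation v \<longleftrightarrow>
     (\<forall>x y. x \<noteq> 0 \<longrightarrow> y \<noteq> 0 \<longrightarrow> v (x * y) = v x + v y) \<and>
     (\<forall>x y. x \<noteq> 0 \<longrightarrow> y \<noteq> 0 \<longrightarrow> x + y \<noteq> 0 \<longrightarrow> min (v x) (v y) \<le> v (x + y)) \<and>
     (\<exists>p. p \<noteq> 0 \<and> v p = 1)"

definition vsmall :: "('a::field \<Rightarrow> int) \<Rightarrow> 'a \<Rightarrow> int \<Rightarrow> bool" where
  "vsmall v x k \<longleftrightarrow> x = 0 \<or> k \<le> v x"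

definition v_complete :: "('a::field \<Rightarrow> int) \<Rightarrow> bool" where
  "v_complete v \<longleftrightarrow>
     (\<forall>s :: nat \<Rightarrow> 'a.
        (\<forall>k. \<exists>N. \<forall>m\<ge>N. \<forall>n\<ge>N. vsmall v (s m - s n) k) \<longrightarrow>
        (\<exists>L. \<forall>k. \<exists>N. \<forall>n\<ge>N. vsmall v (s n - L) k))"

definition int_ring :: "('a::field \<Rightarrow> int) \<Rightarrow> 'a set" where
  "int_ring v = {x. x = 0 \<or> 0 \<le> v x}"

definition finite_residue_field :: "('a::field \<Rightarrow> int) \<Rightarrow> bool" where
  "finite_residue_field v \<longleftrightarrow>
     (\<exists>S. finite S \<and> S \<subseteq> int_ring v \<and> (\<forall>x\<in>int_ring v. \<exists>s\<in>S. vsmall v (x - s) 1))"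

definition nonarch_local_field :: "('a::field \<Rightarrow> int) \<Rightarrow> bool" where
  "nonarch_local_field v \<longleftrightarrow> discrete_valuation v \<and> v_complete v \<and> finite_residue_field v"

definition prime_elem_in :: "'a::field set \<Rightarrow> 'a \<Rightarrow> bool" where
  "prime_elem_in R p \<longleftrightarrow> p \<in> R \<and> p \<noteq> 0 \<and> \<not> (\<exists>u\<in>R. p * u = 1) \<and>
     (\<forall>a\<in>R. \<forall>b\<in>R. (\<exists>c\<in>R. a * b = p * c) \<longrightarrow> (\<exists>c\<in>R. a = p * c) \<or> (\<exists>c\<in>R. b = p * c))"

definition Z2 :: "(nat \<Rightarrow> int) set" where
  "Z2 = {a. \<forall>k. 0 \<le> a k \<and> a k < 2 ^ k \<and> a (Suc k) mod 2 ^ k = a k}"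

definition Z2_add :: "(nat \<Rightarrow> int) \<Rightarrow> (nat \<Rightarrow> int) \<Rightarrow> (nat \<Rightarrow> int)" where
  "Z2_add a b = (\<lambda>k. (a k + b k) mod 2 ^ k)"

definition Z2_mul :: "(nat \<Rightarrow> int) \<Rightarrow> (nat \<Rightarrow> int) \<Rightarrow> (nat \<Rightarrow> int)" where
  "Z2_mul a b = (\<lambda>k. (a k * b k) mod 2 ^ k)"

definition ring_iso_Z2 :: "'a::field set \<Rightarrow> bool" where
  "ring_iso_Z2 R \<longleftrightarrow> (\<exists>\<phi>. bij_betw \<phi> R Z2 \<and>
      (\<forall>x\<in>R. \<forall>y\<in>R. \<phi> (x + y) = Z2_add (\<phi> x) (\<phi> y) \<and> \<phi> (x * y) = Z2_mul (\<phi> x) (\<phi> y)))"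

definition mat_over :: "'a set \<Rightarrow> 'a mat \<Rightarrow> bool" where
  "mat_over R A \<longleftrightarrow> (\<forall>i<dim_row A. \<forall>j<dim_col A. A $$ (i, j) \<in> R)"

text \<open>Gram matrix (w.r.t. an R-basis) of an integral nondegenerate R-lattice of rank n.\<close>
definition lattice_gram :: "'a::field set \<Rightarrow> nat \<Rightarrow> 'a mat \<Rightarrow> bool" where
  "lattice_gram R n G \<longleftrightarrow> G \<in> carrier_mat n n \<and> transpose_mat G = G \<and> mat_over R G \<and> det G \<noteq> 0"

text \<open>X (columns = images of the basis of L in the basis of M) is a representation of the
 lattice with Gram matrix G by the lattice with Gram matrix H.\<close>
definition represents :: "'a::field set \<Rightarrow> 'a mat \<Rightarrow> 'a mat \<Rightarrow> 'a mat \<Rightarrow> bool" where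
  "represents R H G X \<longleftrightarrow> X \<in> carrier_mat (dim_row H) (dim_row G) \<and> mat_over R X \<and>
     transpose_mat X * H * X = G"

definition join_cols :: "'a mat \<Rightarrow> 'a mat \<Rightarrow> 'a mat" where
  "join_cols X Y = mat (dim_row X) (dim_col X + dim_col Y)
     (\<lambda>(i, j). if j < dim_col X then X $$ (i, j) else Y $$ (i, j - dim_col X))"

text \<open>Primitive: the image is a direct summand, i.e. the columns of X extend to an R-basis.\<close>
definition prim_represents :: "'a::field set \<Rightarrow> 'a mat \<Rightarrow> 'a mat \<Rightarrow> 'a mat \<Rightarrow> bool" where
  "prim_represents R H G X \<longleftrightarrow> represents R H G X \<and>
     (\<exists>Y. Y \<in> carrier_mat (dim_row H) (dim_row H - dim_row G) \<and> mat_over R Y \<and>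
          (\<exists>u\<in>R. det (join_cols X Y) * u = 1))"

definition prim_n_universal :: "'a::field set \<Rightarrow> nat \<Rightarrow> 'a mat \<Rightarrow> bool" where
  "prim_n_universal R n H \<longleftrightarrow> lattice_gram R (dim_row H) H \<and>
     (\<forall>G. lattice_gram R n G \<longrightarrow> (\<exists>X. prim_represents R H G X))"

definition u_star :: "'a::field set \<Rightarrow> nat \<Rightarrow> nat" where
  "u_star R n = (LEAST m. \<exists>H. H \<in> carrier_mat m m \<and> prim_n_universal R n H)"

definition orth_sum :: "'a::zero mat \<Rightarrow> 'a mat \<Rightarrow> 'a mat" where
  "orth_sum A B = four_block_mat A (0\<^sub>m (dim_row A) (dim_col B)) (0\<^sub>m (dim_row B) (dim_col A)) B"

definition hyp_plane :: "'a::{zero,one} mat" where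
  "hyp_plane = mat_of_rows_list 2 [[0, 1], [1, 0]]"

definition hyp_pow :: "nat \<Rightarrow> 'a::{zero,one} mat" where
  "hyp_pow k = ((orth_sum hyp_plane) ^^ k) (0\<^sub>m 0 0)"

definition diag_lattice :: "'a::zero list \<Rightarrow> 'a mat" where
  "diag_lattice xs = mat (length xs) (length xs) (\<lambda>(i, j). if i = j then xs ! i else 0)"

end

theory Submission
  imports Defs
begin

locale lf =
  fixes v :: "'a::field \<Rightarrow> int"
  assumes disc: "discrete_valuation v"
    and two_nz: "(2::'a) \<noteq> 0"
    and pr2: "prime_elem_in (int_ring v) 2"
begin

abbreviation R where "R \<equiv> int_ring v"

lemma two_nz'[simp]: "(2::'a) \<noteq> 0" using two_nz .
lemma four_nz[simp]: "(4::'a) \<noteq> 0"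
  using two_nz by (metis mult_2 mult_eq_0_iff numeral_Bit0 one_plus_numeral semiring_norm(2) numeral_One)

lemma vmult: "x \<noteq> 0 \<Longrightarrow> y \<noteq> 0 \<Longrightarrow> v (x * y) = v x + v y"
  using disc unfolding discrete_valuation_def by blast

lemma vadd: "x \<noteq> 0 \<Longrightarrow> y \<noteq> 0 \<Longrightarrow> x + y \<noteq> 0 \<Longrightarrow> min (v x) (v y) \<le> v (x + y)"
  using disc unfolding discrete_valuation_def by blast

lemma v1[simp]: "v 1 = 0"
  using vmult[of 1 1] by simp

lemma vneg1[simp]: "v (-1) = 0"
  using vmult[of "-1" "-1"] by simp

lemma vuminus[simp]: "v (- x) = v x" if "x \<noteq> 0"
  using vmult[of "-1" x] that by simp

lemma vinv: "x \<noteq> 0 \<Longrightarrow> v (inverse x) = - v x"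
  using vmult[of x "inverse x"] by simp

lemma vdiv: "x \<noteq> 0 \<Longrightarrow> y \<noteq> 0 \<Longrightarrow> v (x / y) = v x - v y"
  by (simp add: divide_inverse vmult vinv)

lemma memR: "x \<in> R \<longleftrightarrow> x = 0 \<or> 0 \<le> v x"
  unfolding int_ring_def by simp

lemma R0[simp]: "0 \<in> R" and R1[simp]: "1 \<in> R"
  by (auto simp: memR)

lemma Rmult[simp,intro]: "x \<in> R \<Longrightarrow> y \<in> R \<Longrightarrow> x * y \<in> R"
  by (cases "x = 0 \<or> y = 0") (auto simp: memR vmult)

lemma Radd[simp,intro]: "x \<in> R \<Longrightarrow> y \<in> R \<Longrightarrow> x + y \<in> R"
proof -
  assume a: "x \<in> R" "y \<in> R"
  show "x + y \<in> R"
  proof (cases "x = 0 \<or> y = 0 \<or> x + y = 0")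
    case True then show ?thesis using a by auto
  next
    case False
    then have "min (v x) (v y) \<le> v (x + y)" using vadd by blast
    then show ?thesis using a False by (auto simp: memR)
  qed
qed

lemma Rneg[simp,intro]: "x \<in> R \<Longrightarrow> - x \<in> R"
  by (cases "x = 0") (auto simp: memR)

lemma Rneg_iff[simp]: "- x \<in> R \<longleftrightarrow> x \<in> R"
  using Rneg[of x] Rneg[of "-x"] by auto

lemma Rdiff[simp,intro]: "x \<in> R \<Longrightarrow> y \<in> R \<Longrightarrow> x - y \<in> R"
  using Radd[of x "-y"] by simp

lemma Rpow[simp,intro]: "x \<in> R \<Longrightarrow> x ^ k \<in> R"
  by (induct k) auto

lemma R2[simp]: "2 \<in> R"
  using pr2 unfolding prime_elem_in_def by blast

lemma Rof_nat[simp]: "of_nat k \<in> R"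
  by (induct k) auto

lemma Rof_int[simp]: "of_int k \<in> R"
  by (cases k) auto

lemma Rnumeral[simp]: "numeral k \<in> R"
  using Rof_nat[of "numeral k"] by simp

lemma Rsum[intro]: "(\<And>x. x \<in> S \<Longrightarrow> f x \<in> R) \<Longrightarrow> sum f S \<in> R"
  by (induct S rule: infinite_finite_induct) auto

lemma Rprod[intro]: "(\<And>x. x \<in> S \<Longrightarrow> f x \<in> R) \<Longrightarrow> prod f S \<in> R"
  by (induct S rule: infinite_finite_induct) auto

lemma v2[simp]: "v 2 = 1"
proof -
  obtain p :: 'a where p: "p \<noteq> 0" "v p = 1" using disc unfolding discrete_valuation_def by blast
  have v2ge: "v 2 \<ge> 1"
  proof (rule ccontr)
    assume "\<not> v 2 \<ge> 1"
    then have "v 2 \<le> 0" by simp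
    moreover have "v (inverse 2) = - v 2" by (rule vinv[OF two_nz])
    ultimately have "inverse 2 \<in> R" unfolding memR by simp
    then show False using pr2 unfolding prime_elem_in_def by (metis two_nz right_inverse)
  qed
  have pR: "p \<in> R" using p by (simp add: memR)
  have qR: "2 / p \<in> R" using p two_nz v2ge by (simp add: memR vdiv)
  have "p * (2 / p) = 2 * 1" using p by simp
  then obtain c where c: "c \<in> R" "p = 2 * c \<or> 2 / p = 2 * c"
    using pr2 pR qR unfolding prime_elem_in_def by (metis R1)
  show ?thesis
  proof (cases "p = 2 * c")
    case True
    then have "c \<noteq> 0" using p by auto
    then have "v p = v 2 + v c" using True vmult two_nz by simp
    then show ?thesis using c p v2ge True \<open>c \<noteq> 0\<close> by (simp add: memR)
  next
    case False
    then have "c = 1 / p" using c two_nz p by (auto simp: field_simps)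
    then show ?thesis using c p by (simp add: memR vdiv)
  qed
qed

lemma v2pow[simp]: "v (2 ^ k) = int k"
  by (induct k) (auto simp: vmult two_nz)

lemma div2pow: "x / 2 ^ k \<in> R \<longleftrightarrow> x = 0 \<or> int k \<le> v x"
  by (cases "x = 0") (auto simp: memR vdiv two_nz)

lemma div2: "x / 2 \<in> R \<longleftrightarrow> x = 0 \<or> 1 \<le> v x"
  using div2pow[of x 1] by simp

lemma div4: "x / 4 \<in> R \<longleftrightarrow> x = 0 \<or> 2 \<le> v x"
  using div2pow[of x 2] by simp

lemma unitR: "x \<in> R \<Longrightarrow> x / 2 \<notin> R \<Longrightarrow> inverse x \<in> R \<and> x \<noteq> 0"
proof -
  assume a: "x \<in> R" "x / 2 \<notin> R"
  then have x0: "x \<noteq> 0" by auto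
  have "\<not> 1 \<le> v x" using a(2) x0 div2 by auto
  moreover have "0 \<le> v x" using a(1) x0 memR by auto
  ultimately have "v x = 0" by simp
  then have "v (inverse x) = 0" using vinv[OF x0] by simp
  then show ?thesis using x0 unfolding memR by simp
qed

lemma prime2: "x \<in> R \<Longrightarrow> y \<in> R \<Longrightarrow> (x * y) / 2 \<in> R \<Longrightarrow> x / 2 \<in> R \<or> y / 2 \<in> R"
proof -
  assume a: "x \<in> R" "y \<in> R" "(x * y) / 2 \<in> R"
  show ?thesis
  proof (cases "x = 0 \<or> y = 0")
    case True then show ?thesis by auto
  next
    case False
    then have "v (x * y) = v x + v y" by (simp add: vmult)
    moreover have "1 \<le> v (x * y)" using a(3) False unfolding div2 by auto
    moreover have "0 \<le> v x" "0 \<le> v y" using a False unfolding memR by auto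
    ultimately have "1 \<le> v x \<or> 1 \<le> v y" by linarith
    then show ?thesis unfolding div2 by auto
  qed
qed

lemma half_not_R: "1 / 2 \<notin> R"
proof
  assume "1 / 2 \<in> R"
  moreover have "v (1/2) = -1" using vdiv[of 1 2] two_nz by simp
  ultimately show False unfolding memR using two_nz by simp
qed

end

context lf begin

definition cls :: "'a \<Rightarrow> 'a set" where "cls x = {y \<in> R. (x - y) / 2 \<in> R}"

lemma cls_eq: "x \<in> R \<Longrightarrow> y \<in> R \<Longrightarrow> cls x = cls y \<longleftrightarrow> (x - y) / 2 \<in> R"
proof
  assume a: "x \<in> R" "y \<in> R" "cls x = cls y"
  have "y \<in> cls y" using a by (simp add: cls_def)
  then have "y \<in> cls x" using a by simp
  then show "(x - y) / 2 \<in> R" by (simp add: cls_def)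
next
  assume a: "x \<in> R" "y \<in> R" "(x - y) / 2 \<in> R"
  have e1: "(x - z) / 2 = (x - y) / 2 + (y - z) / 2" for z by (simp add: field_simps)
  have e2: "(y - z) / 2 = (x - z) / 2 - (x - y) / 2" for z by (simp add: field_simps)
  show "cls x = cls y" unfolding cls_def using a e1 e2 by (metis Radd Rdiff)
qed

lemma sq_cong: "x \<in> R \<Longrightarrow> y \<in> R \<Longrightarrow> (x - y) / 2 \<in> R \<Longrightarrow> (x^2 - y^2) / 2 \<in> R"
proof -
  assume a: "x \<in> R" "y \<in> R" "(x - y) / 2 \<in> R"
  have e: "(x^2 - y^2) / 2 = (x - y) / 2 * (x + y)" by (simp add: field_simps power2_eq_square)
  show ?thesis unfolding e using a by (metis Rmult Radd)
qed

lemma sq_inj: "x \<in> R \<Longrightarrow> y \<in> R \<Longrightarrow> (x^2 - y^2) / 2 \<in> R \<Longrightarrow> (x - y) / 2 \<in> R"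
proof -
  assume a: "x \<in> R" "y \<in> R" "(x^2 - y^2) / 2 \<in> R"
  have e: "((x - y) * (x - y)) / 2 = (x^2 - y^2) / 2 - y * (x - y)"
    by (simp add: field_simps power2_eq_square)
  have "((x - y) * (x - y)) / 2 \<in> R" unfolding e using a by (metis Rmult Rdiff)
  then show ?thesis using prime2[of "x - y" "x - y"] a by auto
qed

lemma sqrt_mod2:
  assumes frf: "finite_residue_field v" and x: "x \<in> R"
  shows "\<exists>r\<in>R. (x - r^2) / 2 \<in> R"
proof -
  obtain S where S: "finite S" "S \<subseteq> R" "\<forall>x\<in>R. \<exists>s\<in>S. vsmall v (x - s) 1"
    using frf unfolding finite_residue_field_def by blast
  have vs: "vsmall v z 1 \<longleftrightarrow> z / 2 \<in> R" for z
    unfolding vsmall_def div2 by simp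
  let ?K = "cls ` R"
  have K: "?K = cls ` S"
  proof
    show "cls ` S \<subseteq> cls ` R" using S by auto
    show "cls ` R \<subseteq> cls ` S"
    proof
      fix C assume "C \<in> cls ` R"
      then obtain y where y: "y \<in> R" "C = cls y" by auto
      obtain s where s: "s \<in> S" "vsmall v (y - s) 1" using S y by blast
      have "cls y = cls s" using cls_eq[of y s] y s S vs by auto
      then show "C \<in> cls ` S" using s y by auto
    qed
  qed
  have finK: "finite ?K" using K S by simp
  define h where "h C = cls ((SOME y. y \<in> C) ^ 2)" for C
  have hcls: "h (cls y) = cls (y^2)" if y: "y \<in> R" for y
  proof -
    have "y \<in> cls y" using y by (simp add: cls_def)
    then have "(SOME z. z \<in> cls y) \<in> cls y" by (rule someI)
    then have z: "(SOME z. z \<in> cls y) \<in> R" "(y - (SOME z. z \<in> cls y)) / 2 \<in> R"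
      by (auto simp: cls_def)
    show ?thesis unfolding h_def
      using cls_eq sq_cong[OF y z(1) z(2)] y z(1) by (metis Rpow)
  qed
  have inj: "inj_on h ?K"
  proof (rule inj_onI)
    fix A B assume "A \<in> ?K" "B \<in> ?K" "h A = h B"
    then obtain a b where ab: "a \<in> R" "b \<in> R" "A = cls a" "B = cls b" "h (cls a) = h (cls b)" by auto
    then have "cls (a^2) = cls (b^2)" using hcls by simp
    then have "(a^2 - b^2) / 2 \<in> R" using cls_eq ab by (metis Rpow)
    then have "(a - b) / 2 \<in> R" using sq_inj ab by simp
    then show "A = B" using cls_eq ab by simp
  qed
  have sub: "h ` ?K \<subseteq> ?K" using hcls by auto
  have "h ` ?K = ?K" by (rule endo_inj_surj[OF finK sub inj])
  then have "cls x \<in> h ` ?K" using x by auto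
  then obtain y where y: "y \<in> R" "cls x = cls (y^2)" using hcls by auto
  then have "(x - y^2) / 2 \<in> R" using cls_eq x by (metis Rpow)
  then show ?thesis using y by blast
qed

end

context lf begin

lemma R_div_pow_dvd: "of_int m / 2 ^ k \<in> R \<Longrightarrow> (2::int) ^ k dvd m"
proof (induct k arbitrary: m)
  case 0 then show ?case by simp
next
  case (Suc k)
  have e: "(of_int m :: 'a) / 2 ^ k = (of_int m / 2 ^ Suc k) * 2" by (simp add: field_simps)
  have "of_int m / 2 ^ k \<in> R" unfolding e using Suc.prems by (metis Rmult R2)
  then obtain q where q: "m = 2 ^ k * q" using Suc.hyps by (auto elim: dvdE)
  have e2: "of_int m / 2 ^ Suc k = (of_int q :: 'a) / 2" unfolding q by (simp add: field_simps)
  have qR: "(of_int q :: 'a) / 2 \<in> R" using Suc.prems e2 by metis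
  have "even q"
  proof (rule ccontr)
    assume "odd q"
    then obtain t where t: "q = 2 * t + 1" by (metis oddE)
    have "(of_int q :: 'a) = 2 * of_int t + 1" using t by simp
    then have "(of_int q :: 'a) / 2 = (2 * of_int t) / 2 + 1 / 2" by (metis add_divide_distrib)
    then have h: "(of_int q :: 'a) / 2 = of_int t + 1 / 2" by simp
    have "1 / 2 = (of_int q :: 'a) / 2 - of_int t" by (simp only: h add_diff_cancel_left')
    then have "1 / 2 \<in> R" using qR by (metis Rdiff Rof_int)
    then show False using half_not_R by simp
  qed
  then show ?case unfolding q by auto
qed

definition okrep :: "'a \<Rightarrow> nat \<Rightarrow> int \<Rightarrow> bool" where
  "okrep x k a \<longleftrightarrow> 0 \<le> a \<and> a < 2 ^ k \<and> (x - of_int a) / 2 ^ k \<in> R"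

lemma okrep_uniq: "okrep x k a \<Longrightarrow> okrep x k b \<Longrightarrow> a = b"
proof -
  assume a: "okrep x k a" "okrep x k b"
  have e: "of_int (a - b) / 2 ^ k = (x - of_int b) / 2 ^ k - (x - of_int a) / (2::'a) ^ k"
    by (simp add: field_simps)
  have "of_int (a - b) / (2::'a) ^ k \<in> R" unfolding e using a unfolding okrep_def by (metis Rdiff)
  then have "(2::int) ^ k dvd a - b" by (rule R_div_pow_dvd)
  then obtain q where q: "a - b = 2 ^ k * q" by (auto elim: dvdE)
  have "\<bar>a - b\<bar> < 2 ^ k" using a unfolding okrep_def by auto
  have "q = 0"
  proof (rule ccontr)
    assume "q \<noteq> 0"
    then have "1 \<le> \<bar>q\<bar>" by simp
    then have "(2::int) ^ k * 1 \<le> 2 ^ k * \<bar>q\<bar>" by (intro mult_left_mono) auto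
    then show False using \<open>\<bar>a - b\<bar> < 2 ^ k\<close> unfolding q by (simp add: abs_mult)
  qed
  then show "a = b" using q by simp
qed

lemma okrep_ex:
  assumes dich: "\<forall>x\<in>R. x / 2 \<in> R \<or> (x - 1) / 2 \<in> R" and x: "x \<in> R"
  shows "\<exists>a. okrep x k a"
proof (induct k)
  case 0 then show ?case using x by (auto simp: okrep_def intro!: exI[of _ 0])
next
  case (Suc k)
  then obtain a where a: "okrep x k a" by blast
  let ?y = "(x - of_int a) / 2 ^ k"
  have y: "?y \<in> R" using a by (simp add: okrep_def)
  show ?case
  proof (cases "?y / 2 \<in> R")
    case True
    have e: "(x - of_int a) / 2 ^ Suc k = ?y / 2" by (simp add: field_simps)
    have m: "(x - of_int a) / 2 ^ Suc k \<in> R" using True e by metis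
    have "okrep x (Suc k) a" using a m unfolding okrep_def by auto
    then show ?thesis by blast
  next
    case False
    then have y1: "(?y - 1) / 2 \<in> R" using dich y by blast
    have e: "(x - of_int (a + 2 ^ k)) / 2 ^ Suc k = (?y - 1) / 2" by (simp add: field_simps)
    have m: "(x - of_int (a + 2 ^ k)) / 2 ^ Suc k \<in> R" using y1 e by metis
    have "okrep x (Suc k) (a + 2 ^ k)" using a m unfolding okrep_def by auto
    then show ?thesis by blast
  qed
qed

definition rep :: "'a \<Rightarrow> nat \<Rightarrow> int" where "rep x k = (THE a. okrep x k a)"

lemma rep_ok: "\<forall>x\<in>R. x / 2 \<in> R \<or> (x - 1) / 2 \<in> R \<Longrightarrow> x \<in> R \<Longrightarrow> okrep x k (rep x k)"
  unfolding rep_def using okrep_ex okrep_uniq by (metis theI)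

lemma rep_eq: "\<forall>x\<in>R. x / 2 \<in> R \<or> (x - 1) / 2 \<in> R \<Longrightarrow> x \<in> R \<Longrightarrow> okrep x k a \<Longrightarrow> rep x k = a"
  using rep_ok okrep_uniq by metis

lemma mod_as: "(a::int) mod 2 ^ k = a - 2 ^ k * (a div 2 ^ k)"
  by (simp add: minus_div_mult_eq_mod [symmetric] algebra_simps)

lemma Z2_coh: assumes a: "a \<in> Z2" shows "N \<le> n \<Longrightarrow> a n mod 2 ^ N = a N"
proof (induct n rule: dec_induct)
  case base
  then show ?case using a unfolding Z2_def by auto
next
  case (step n)
  have "a (Suc n) mod 2 ^ N = (a (Suc n) mod 2 ^ n) mod 2 ^ N"
    using step(1) by (simp add: le_imp_power_dvd mod_mod_cancel)
  also have "\<dots> = a n mod 2 ^ N" using a unfolding Z2_def by auto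
  finally show ?case using step by simp
qed

lemma iso_Z2:
  assumes dich: "\<forall>x\<in>R. x / 2 \<in> R \<or> (x - 1) / 2 \<in> R" and comp: "v_complete v"
  shows "ring_iso_Z2 R"
proof -
  define \<phi> where "\<phi> x = (\<lambda>k. rep x k)" for x
  have ok: "x \<in> R \<Longrightarrow> okrep x k (\<phi> x k)" for x k unfolding \<phi>_def using rep_ok dich by blast
  have eq: "x \<in> R \<Longrightarrow> okrep x k a \<Longrightarrow> \<phi> x k = a" for x k a unfolding \<phi>_def using rep_eq dich by blast
  have inZ2: "\<phi> x \<in> Z2" if x: "x \<in> R" for x
    unfolding Z2_def
  proof (safe)
    fix k
    show "0 \<le> \<phi> x k" "\<phi> x k < 2 ^ k" using ok[OF x, of k] by (auto simp: okrep_def)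
    let ?b = "\<phi> x (Suc k)"
    have "okrep x k (?b mod 2 ^ k)"
      unfolding okrep_def
    proof (intro conjI)
      have e: "(x - of_int (?b mod 2 ^ k)) / 2 ^ k
          = ((x - of_int ?b) / 2 ^ Suc k) * 2 + of_int (?b div 2 ^ k)"
        unfolding mod_as by (simp add: field_simps)
      show "(x - of_int (?b mod 2 ^ k)) / 2 ^ k \<in> R"
        unfolding e using ok[OF x, of "Suc k"] unfolding okrep_def by (metis Rmult Radd R2 Rof_int)
    qed auto
    then show "\<phi> x (Suc k) mod 2 ^ k = \<phi> x k" using eq x by metis
  qed
  have add: "\<phi> (x + y) = Z2_add (\<phi> x) (\<phi> y)" if x: "x \<in> R" and y: "y \<in> R" for x y
  proof
    fix k
    let ?s = "\<phi> x k + \<phi> y k"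
    have "okrep (x + y) k (?s mod 2 ^ k)"
      unfolding okrep_def
    proof (intro conjI)
      have e: "(x + y - of_int (?s mod 2 ^ k)) / 2 ^ k
          = (x - of_int (\<phi> x k)) / 2 ^ k + (y - of_int (\<phi> y k)) / 2 ^ k + of_int (?s div 2 ^ k)"
        unfolding mod_as by (simp add: field_simps)
      show "(x + y - of_int (?s mod 2 ^ k)) / 2 ^ k \<in> R"
        unfolding e using ok[OF x, of k] ok[OF y, of k] unfolding okrep_def by (metis Radd Rof_int)
    qed auto
    then show "\<phi> (x + y) k = Z2_add (\<phi> x) (\<phi> y) k" unfolding Z2_add_def using eq x y by (metis Radd)
  qed
  have mul: "\<phi> (x * y) = Z2_mul (\<phi> x) (\<phi> y)" if x: "x \<in> R" and y: "y \<in> R" for x y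
  proof
    fix k
    let ?s = "\<phi> x k * \<phi> y k"
    have "okrep (x * y) k (?s mod 2 ^ k)"
      unfolding okrep_def
    proof (intro conjI)
      have e: "(x * y - of_int (?s mod 2 ^ k)) / 2 ^ k
          = ((x - of_int (\<phi> x k)) / 2 ^ k) * y + of_int (\<phi> x k) * ((y - of_int (\<phi> y k)) / 2 ^ k)
            + of_int (?s div 2 ^ k)"
        unfolding mod_as by (simp add: field_simps)
      show "(x * y - of_int (?s mod 2 ^ k)) / 2 ^ k \<in> R"
        unfolding e using ok[OF x, of k] ok[OF y, of k] y unfolding okrep_def by (metis Radd Rmult Rof_int)
    qed auto
    then show "\<phi> (x * y) k = Z2_mul (\<phi> x) (\<phi> y) k" unfolding Z2_mul_def using eq x y by (metis Rmult)
  qed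
  have inj: "inj_on \<phi> R"
  proof (rule inj_onI)
    fix x y assume x: "x \<in> R" and y: "y \<in> R" and xy: "\<phi> x = \<phi> y"
    show "x = y"
    proof (rule ccontr)
      assume ne: "x \<noteq> y"
      define k where "k = nat (v (x - y)) + 1"
      have e: "(x - y) / 2 ^ k = (x - of_int (\<phi> x k)) / 2 ^ k - (y - of_int (\<phi> y k)) / 2 ^ k"
        using xy by (simp add: field_simps)
      have "(x - y) / 2 ^ k \<in> R" unfolding e using ok[OF x, of k] ok[OF y, of k] unfolding okrep_def by (metis Rdiff)
      then have "int k \<le> v (x - y)" using ne unfolding div2pow by simp
      then show False unfolding k_def by (auto split: if_splits)
    qed
  qed
  have surj: "Z2 \<subseteq> \<phi> ` R"
  proof
    fix a assume a: "a \<in> Z2"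
    define s where "s n = (of_int (a n) :: 'a)" for n
    have cau: "(s m - s n) / 2 ^ N \<in> R" if "N \<le> m" "N \<le> n" for N m n
    proof -
      have "a m mod 2 ^ N = a n mod 2 ^ N" using Z2_coh[OF a] that by simp
      then have "(2::int) ^ N dvd a m - a n" by (simp add: mod_eq_dvd_iff)
      then obtain q where q: "a m - a n = 2 ^ N * q" by (auto elim: dvdE)
      have "(s m - s n) / 2 ^ N = of_int q" unfolding s_def
        by (simp add: field_simps flip: of_int_diff) (metis q of_int_mult of_int_numeral of_int_power mult.commute)
      then show ?thesis by simp
    qed
    have "\<exists>L. \<forall>k. \<exists>N. \<forall>n\<ge>N. vsmall v (s n - L) k"
      using comp unfolding v_complete_def
    proof (elim allE impE)
      show "\<forall>k. \<exists>N. \<forall>m\<ge>N. \<forall>n\<ge>N. vsmall v (s m - s n) k"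
      proof
        fix k :: int
        show "\<exists>N. \<forall>m\<ge>N. \<forall>n\<ge>N. vsmall v (s m - s n) k"
        proof (intro exI allI impI)
          fix m n assume "nat k \<le> m" "nat k \<le> n"
          then have "(s m - s n) / 2 ^ nat k \<in> R" using cau by blast
          then show "vsmall v (s m - s n) k" unfolding div2pow vsmall_def by (auto split: if_splits)
        qed
      qed
    qed
    then obtain L where L: "\<forall>k. \<exists>N. \<forall>n\<ge>N. vsmall v (s n - L) k" by blast
    have LR: "L \<in> R"
    proof -
      obtain N where "\<forall>n\<ge>N. vsmall v (s n - L) 0" using L by blast
      then have "vsmall v (s N - L) 0" by simp
      then have "s N - L \<in> R" unfolding vsmall_def memR by auto
      then have "s N - (s N - L) \<in> R" unfolding s_def by (metis Rdiff Rof_int)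
      then show ?thesis by simp
    qed
    have "\<phi> L = a"
    proof
      fix k
      obtain N where N: "\<forall>n\<ge>N. vsmall v (s n - L) (int k)" using L by blast
      define n where "n = max N k"
      have "vsmall v (s n - L) (int k)" using N n_def by simp
      then have t1: "(s n - L) / 2 ^ k \<in> R" unfolding vsmall_def div2pow by auto
      have t2: "(s n - s k) / 2 ^ k \<in> R" using cau n_def by simp
      have e: "(L - of_int (a k)) / 2 ^ k = (s n - s k) / 2 ^ k - (s n - L) / 2 ^ k"
        unfolding s_def by (simp add: field_simps)
      have "okrep L k (a k)" unfolding okrep_def using a t1 t2 unfolding Z2_def
        by (auto simp: e)
      then show "\<phi> L k = a k" using eq LR by blast
    qed
    then show "a \<in> \<phi> ` R" using LR by blast
  qed
  have "bij_betw \<phi> R Z2" unfolding bij_betw_def using inj inZ2 surj by auto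
  then show ?thesis unfolding ring_iso_Z2_def using add mul by blast
qed

end

context lf begin

lemma c0_exists:
  assumes "v_complete v" "\<not> ring_iso_Z2 R"
  shows "\<exists>c\<in>R. c / 2 \<notin> R \<and> (c - 1) / 2 \<notin> R"
  using iso_Z2 assms by blast

lemma unit_sq_not2: "r \<in> R \<Longrightarrow> r / 2 \<notin> R \<Longrightarrow> r^2 / 2 \<notin> R"
  unfolding power2_eq_square using prime2[of r r] by blast

lemma hyp_rep:
  assumes frf: "finite_residue_field v"
    and c0: "c0 \<in> R" "c0 / 2 \<notin> R" "(c0 - 1) / 2 \<notin> R"
    and g: "g \<in> R" and good: "g / 2 \<notin> R \<or> g / 4 \<in> R"
  shows "\<exists>x\<in>R. \<exists>y\<in>R. x^2 - y^2 = g \<and> (x / 2 \<notin> R \<or> y / 2 \<notin> R)"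
proof (cases "g / 2 \<in> R")
  case False
  obtain r where r: "r \<in> R" "(g - r^2) / 2 \<in> R" using sqrt_mod2[OF frf g] by blast
  have rn: "r / 2 \<notin> R"
  proof
    assume "r / 2 \<in> R"
    then have "r^2 / 2 \<in> R" using r unfolding power2_eq_square
      by (metis Rmult times_divide_eq_left)
    moreover have "g / 2 = (g - r^2) / 2 + r^2 / 2" by (simp add: field_simps)
    ultimately show False using False r by (metis Radd)
  qed
  obtain ir: "inverse r \<in> R" "r \<noteq> 0" using unitR[OF r(1) rn] by blast
  define x where "x = ((g - r^2) / 2 + r^2) * inverse r"
  define y where "y = ((g - r^2) / 2) * inverse r"
  have xR: "x \<in> R" unfolding x_def using r ir by (metis Radd Rmult Rpow)
  have yR: "y \<in> R" unfolding y_def using r ir by (metis Rmult)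
  have xy: "x - y = r" unfolding x_def y_def using ir by (simp add: field_simps power2_eq_square)
  have xy2: "x + y = g * inverse r" unfolding x_def y_def using ir by (simp add: field_simps power2_eq_square)
  have "x^2 - y^2 = (x - y) * (x + y)" by (simp add: algebra_simps power2_eq_square)
  then have eq: "x^2 - y^2 = g" using xy xy2 ir by simp
  have "x / 2 \<notin> R \<or> y / 2 \<notin> R"
  proof (rule ccontr)
    assume "\<not> ?thesis"
    then have "x / 2 - y / 2 \<in> R" by auto
    moreover have "x / 2 - y / 2 = r / 2" using xy by (simp add: diff_divide_distrib[symmetric])
    ultimately show False using rn by simp
  qed
  then show ?thesis using xR yR eq by blast
next
  case True
  then have t: "g / 4 \<in> R" using good by blast
  define t where "t = g / 4"
  have tR: "t \<in> R" unfolding t_def using t .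
  obtain c where c: "c \<in> R" "c / 2 \<notin> R" "(t + c^2) / 2 \<notin> R"
  proof (cases "(t - 1) / 2 \<in> R")
    case False
    have "(t + 1) / 2 = (t - 1) / 2 + 1" by (simp add: field_simps)
    then have "(t + 1) / 2 \<notin> R" using False by (metis Rdiff R1 add_diff_cancel_right')
    moreover have "(1::'a) / 2 \<notin> R" by (rule half_not_R)
    ultimately show ?thesis using that[of 1] by simp
  next
    case True
    have "(t + c0^2) / 2 \<notin> R"
    proof
      assume a: "(t + c0^2) / 2 \<in> R"
      have "(1 + c0)^2 / 2 = (t + c0^2) / 2 - (t - 1) / 2 + c0" by (simp add: field_simps power2_eq_square)
      then have "(1 + c0)^2 / 2 \<in> R" using a True c0 by (metis Radd Rdiff)
      then have "(1 + c0) / 2 \<in> R" using unit_sq_not2[of "1 + c0"] c0 by auto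
      moreover have "(c0 - 1) / 2 = (1 + c0) / 2 - 1" by (simp add: field_simps)
      ultimately show False using c0 by (metis Rdiff R1)
    qed
    then show ?thesis using that[of c0] c0 by blast
  qed
  obtain ic: "inverse c \<in> R" "c \<noteq> 0" using unitR[OF c(1) c(2)] by blast
  define x where "x = (t + c^2) * inverse c"
  define y where "y = (t - c^2) * inverse c"
  have xR: "x \<in> R" unfolding x_def using c tR ic by (metis Radd Rmult Rpow)
  have yR: "y \<in> R" unfolding y_def using c tR ic by (metis Rdiff Rmult Rpow)
  have "x^2 - y^2 = (x - y) * (x + y)" by (simp add: algebra_simps power2_eq_square)
  also have "\<dots> = (2 * c) * (2 * t * inverse c)" unfolding x_def y_def using ic
    by (simp add: field_simps power2_eq_square)
  also have "\<dots> = g" unfolding t_def using ic by (simp add: field_simps)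
  finally have eq: "x^2 - y^2 = g" .
  have "x / 2 \<notin> R"
  proof
    assume "x / 2 \<in> R"
    then have "x / 2 * c \<in> R" using c by (metis Rmult)
    moreover have "x / 2 * c = (t + c^2) / 2" unfolding x_def using ic by (simp add: field_simps)
    ultimately show False using c by metis
  qed
  then show ?thesis using xR yR eq by blast
qed

end

lemma triple_entry:
  assumes A: "A \<in> carrier_mat N n" and H: "H \<in> carrier_mat N N" and B: "B \<in> carrier_mat N m"
    and a: "a < n" and b: "b < m"
  shows "(transpose_mat A * H * B) $$ (a, b) = (\<Sum>i<N. \<Sum>j<N. A $$ (i, a) * H $$ (i, j) * B $$ (j, b))"
proof -
  have "(transpose_mat A * H * B) $$ (a, b) = (\<Sum>i<N. A $$ (i, a) * (\<Sum>j<N. H $$ (i, j) * B $$ (j, b)))"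
    using A H B a b by (simp add: scalar_prod_def lessThan_atLeast0)
  also have "\<dots> = (\<Sum>i<N. \<Sum>j<N. A $$ (i, a) * H $$ (i, j) * B $$ (j, b))"
    by (simp add: sum_distrib_left mult.assoc)
  finally show ?thesis .
qed

lemma assoc4:
  assumes "A \<in> carrier_mat a b" "B \<in> carrier_mat b c" "C \<in> carrier_mat c d"
    "D \<in> carrier_mat d e" "E \<in> carrier_mat e f"
  shows "(A * B) * C * (D * E) = A * (B * C * D) * E"
proof -
  have "(A * B) * C = A * (B * C)" using assms by simp
  then have "(A * B) * C * (D * E) = A * ((B * C) * (D * E))"
    using assms by (simp add: assoc_mult_mat[of A a b "B * C" d "D * E" f])
  also have "(B * C) * (D * E) = ((B * C) * D) * E"
    by (rule assoc_mult_mat[symmetric, of "B * C" b d D e E f]) (use assms in auto)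
  also have "A * (((B * C) * D) * E) = (A * ((B * C) * D)) * E"
    by (rule assoc_mult_mat[symmetric, of A a b "B * C * D" e E f]) (use assms in auto)
  finally show ?thesis .
qed

context lf begin

lemma det_R: "mat_over R A \<Longrightarrow> det A \<in> R"
  unfolding det_def mat_over_def
  by (auto intro!: Rsum Rprod Rmult simp: sign_def)

lemma mat_over_mult: "mat_over R A \<Longrightarrow> mat_over R B \<Longrightarrow> dim_col A = dim_row B \<Longrightarrow> mat_over R (A * B)"
  unfolding mat_over_def by (auto simp: scalar_prod_def intro!: Rsum)

lemma mat_over_one: "mat_over R (1\<^sub>m n)"
  unfolding mat_over_def by auto

definition PR :: "'a mat \<Rightarrow> 'a mat \<Rightarrow> bool" where
  "PR M G \<longleftrightarrow> (\<exists>X. prim_represents R M G X)"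

lemma join_mult:
  fixes X Y Q :: "'a mat"
  assumes X: "X \<in> carrier_mat N n" and Y: "Y \<in> carrier_mat N (N - n)" and Q: "Q \<in> carrier_mat n n"
    and nN: "n \<le> N"
  shows "join_cols (X * Q) Y = join_cols X Y *
     four_block_mat Q (0\<^sub>m n (N - n)) (0\<^sub>m (N - n) n) (1\<^sub>m (N - n))"
    (is "_ = _ * ?B")
proof (rule eq_matI)
  show "dim_row (join_cols (X * Q) Y) = dim_row (join_cols X Y * ?B)"
    using X Y Q by (simp add: join_cols_def)
  show "dim_col (join_cols (X * Q) Y) = dim_col (join_cols X Y * ?B)"
    using X Y Q by (simp add: join_cols_def)
  fix i j assume i: "i < dim_row (join_cols X Y * ?B)" and j: "j < dim_col (join_cols X Y * ?B)"
  have iN: "i < N" and jN: "j < n + (N - n)" using i j X Y Q by (auto simp: join_cols_def)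
  have rhs: "(join_cols X Y * ?B) $$ (i, j) = (\<Sum>k\<in>{0..<n + (N - n)}. join_cols X Y $$ (i, k) * ?B $$ (k, j))"
    using iN jN X Y Q by (simp add: join_cols_def scalar_prod_def)
  show "join_cols (X * Q) Y $$ (i, j) = (join_cols X Y * ?B) $$ (i, j)"
  proof (cases "j < n")
    case True
    have "(\<Sum>k\<in>{0..<n + (N - n)}. join_cols X Y $$ (i, k) * ?B $$ (k, j))
        = (\<Sum>k\<in>{0..<n}. join_cols X Y $$ (i, k) * ?B $$ (k, j))"
      by (rule sum.mono_neutral_right) (use True Q X Y iN in \<open>auto simp: join_cols_def\<close>)
    also have "\<dots> = (\<Sum>k\<in>{0..<n}. X $$ (i, k) * Q $$ (k, j))"
      by (rule sum.cong) (use True Q X Y iN in \<open>auto simp: join_cols_def\<close>)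
    finally show ?thesis unfolding rhs using True Q X Y iN by (simp add: join_cols_def scalar_prod_def)
  next
    case False
    have "(\<Sum>k\<in>{0..<n + (N - n)}. join_cols X Y $$ (i, k) * ?B $$ (k, j))
        = (\<Sum>k\<in>{0..<n + (N - n)}. if k = j then Y $$ (i, j - n) else 0)"
      by (rule sum.cong) (use False Q X Y iN jN in \<open>auto simp: join_cols_def\<close>)
    also have "\<dots> = Y $$ (i, j - n)" using jN by simp
    finally show ?thesis unfolding rhs using False Q X Y iN jN by (simp add: join_cols_def)
  qed
qed

lemma PR_basis_change:
  assumes M: "M \<in> carrier_mat N N" and G: "G \<in> carrier_mat n n"
    and P: "P \<in> carrier_mat n n" and Q: "Q \<in> carrier_mat n n"
    and PR: "mat_over R P" and QR: "mat_over R Q" and PQ: "P * Q = 1\<^sub>m n" and nN: "n \<le> N"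
    and pr: "PR M (transpose_mat P * G * P)"
  shows "PR M G"
proof -
  obtain X' where X': "prim_represents R M (transpose_mat P * G * P) X'" using pr unfolding PR_def by blast
  have dG: "dim_row (transpose_mat P * G * P) = n" using P by simp
  have X'c: "X' \<in> carrier_mat N n" and X'R: "mat_over R X'"
    and X'e: "transpose_mat X' * M * X' = transpose_mat P * G * P"
    using X' M dG unfolding prim_represents_def represents_def by auto
  obtain Y u where Y: "Y \<in> carrier_mat N (N - n)" "mat_over R Y" and u: "u \<in> R" "det (join_cols X' Y) * u = 1"
    using X' M dG unfolding prim_represents_def by auto
  define X where "X = X' * Q"
  have Xc: "X \<in> carrier_mat N n" unfolding X_def using X'c Q by simp
  have XR: "mat_over R X" unfolding X_def using X'R QR X'c Q by (intro mat_over_mult) auto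
  have "transpose_mat X * M * X = (transpose_mat Q * transpose_mat X') * M * (X' * Q)"
    unfolding X_def using X'c Q by (simp add: transpose_mult)
  also have "\<dots> = transpose_mat Q * (transpose_mat X' * M * X') * Q"
    by (rule assoc4[of _ n n _ N _ N _ n _ n]) (use X'c Q M in auto)
  also have "\<dots> = transpose_mat Q * (transpose_mat P * G * P) * Q" using X'e by simp
  also have "\<dots> = (transpose_mat Q * transpose_mat P) * G * (P * Q)"
    by (rule assoc4[symmetric, of _ n n _ n _ n _ n _ n]) (use P Q G in auto)
  also have "\<dots> = transpose_mat (P * Q) * G * (P * Q)" using P Q by (simp add: transpose_mult)
  also have "\<dots> = G" using PQ G by simp
  finally have Xe: "transpose_mat X * M * X = G" .
  have jm: "join_cols X Y = join_cols X' Y * four_block_mat Q (0\<^sub>m n (N - n)) (0\<^sub>m (N - n) n) (1\<^sub>m (N - n))"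
    unfolding X_def by (rule join_mult[OF X'c Y(1) Q nN])
  have jc: "join_cols X' Y \<in> carrier_mat N N" using X'c Y nN by (auto simp: join_cols_def)
  have dB: "det (four_block_mat Q (0\<^sub>m n (N - n)) (0\<^sub>m (N - n) n) (1\<^sub>m (N - n))) = det Q"
    by (subst det_four_block_mat_lower_left_zero[OF Q]) auto
  have dj: "det (join_cols X Y) = det (join_cols X' Y) * det Q"
    unfolding jm using jc Q nN by (subst det_mult[of _ N]) (auto simp: dB)
  have "det P * det Q = 1" using det_mult[OF P Q] PQ by simp
  moreover have "det (join_cols X Y) * (u * det P) = (det (join_cols X' Y) * u) * (det P * det Q)"
    using dj by (simp add: algebra_simps)
  ultimately have "det (join_cols X Y) * (u * det P) = 1" using u by simp
  moreover have "u * det P \<in> R" using u det_R[OF PR] by simp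
  ultimately have "prim_represents R M G X"
    unfolding prim_represents_def represents_def using Xc XR Xe Y M G by auto
  then show ?thesis unfolding PR_def by blast
qed

end

lemma hyp_pow_Suc: "hyp_pow (Suc k) = orth_sum hyp_plane (hyp_pow k)"
  unfolding hyp_pow_def by simp

lemma hyp_plane_carrier: "hyp_plane \<in> carrier_mat 2 2"
  unfolding hyp_plane_def mat_of_rows_list_def carrier_mat_def by simp

lemma hp: "(hyp_plane :: 'a::{zero,one} mat) $$ (0, 0) = 0"  "(hyp_plane :: 'a::{zero,one} mat) $$ (0, 1) = 1"
 "(hyp_plane :: 'a::{zero,one} mat) $$ (1, 0) = 1"  "(hyp_plane :: 'a::{zero,one} mat) $$ (1, 1) = 0"
  unfolding hyp_plane_def mat_of_rows_list_def by (simp_all add: numeral_2_eq_2)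

lemma hyp_plane_entry: assumes "i < 2" "j < 2"
  shows "(hyp_plane :: 'a::{zero,one} mat) $$ (i, j) = (if i \<noteq> j then 1 else 0)"
proof -
  have "i = 0 \<or> i = 1" "j = 0 \<or> j = 1" using assms by auto
  then show ?thesis using hp by (elim disjE) simp_all
qed

lemma hyp_pow_carrier: "hyp_pow k \<in> carrier_mat (2 * k) (2 * k)"
proof (induct k)
  case 0 then show ?case by (simp add: hyp_pow_def)
next
  case (Suc k)
  then show ?case unfolding hyp_pow_Suc orth_sum_def using hyp_plane_carrier
    unfolding carrier_mat_def by simp
qed

lemma hyp_pow_entry:
  "i < 2 * k \<Longrightarrow> j < 2 * k \<Longrightarrow> (hyp_pow k :: 'a::{zero,one} mat) $$ (i, j) = (if i div 2 = j div 2 \<and> i \<noteq> j then 1 else 0)"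
proof (induct k arbitrary: i j)
  case 0 then show ?case by simp
next
  case (Suc k)
  have c: "(hyp_pow k :: 'a mat) \<in> carrier_mat (2 * k) (2 * k)" by (rule hyp_pow_carrier)
  have hp: "(hyp_plane :: 'a mat) \<in> carrier_mat 2 2" by (rule hyp_plane_carrier)
  have e: "(hyp_pow (Suc k) :: 'a mat) $$ (i, j) =
     (if i < 2 then if j < 2 then hyp_plane $$ (i, j) else 0
      else if j < 2 then 0 else hyp_pow k $$ (i - 2, j - 2))"
    unfolding hyp_pow_Suc orth_sum_def using Suc.prems c hp by (subst index_mat_four_block) auto
  show ?case
  proof (cases "i < 2 \<or> j < 2")
    case True
    then show ?thesis unfolding e using Suc.prems by (auto simp: hyp_plane_entry less_2_cases_iff)
  next
    case False
    then have "i - 2 < 2 * k" "j - 2 < 2 * k" using Suc.prems by auto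
    then have "(hyp_pow k :: 'a mat) $$ (i - 2, j - 2) = (if (i - 2) div 2 = (j - 2) div 2 \<and> i - 2 \<noteq> j - 2 then 1 else 0)"
      using Suc.hyps by blast
    moreover have "(i - 2) div 2 = (j - 2) div 2 \<longleftrightarrow> i div 2 = j div 2"
    proof -
      obtain i' j' where "i = i' + 2" "j = j' + 2" using False by (metis add.commute le_Suc_ex not_less)
      then show ?thesis by simp
    qed
    moreover have "i - 2 \<noteq> j - 2 \<longleftrightarrow> i \<noteq> j" using False by auto
    ultimately show ?thesis unfolding e using False by auto
  qed
qed

lemma dl: "(diag_lattice [1, -1] :: 'a::{zero,one,uminus} mat) $$ (0, 0) = 1"
  "(diag_lattice [1, -1] :: 'a::{zero,one,uminus} mat) $$ (0, 1) = 0"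
  "(diag_lattice [1, -1] :: 'a::{zero,one,uminus} mat) $$ (1, 0) = 0"
  "(diag_lattice [1, -1] :: 'a::{zero,one,uminus} mat) $$ (1, 1) = -1"
  unfolding diag_lattice_def by (simp_all add: numeral_2_eq_2)

definition Mn :: "nat \<Rightarrow> 'a::{zero,one,uminus} mat" where
  "Mn l = orth_sum (hyp_pow l) (diag_lattice [1, -1])"

lemma Mn_carrier: "Mn l \<in> carrier_mat (2 * l + 2) (2 * l + 2)"
  using hyp_pow_carrier[of l, unfolded carrier_mat_def] unfolding Mn_def orth_sum_def diag_lattice_def carrier_mat_def by simp

lemma Mn_entry:
  assumes "i < 2 * l + 2" "j < 2 * l + 2"
  shows "(Mn l :: 'a::{zero,one,uminus} mat) $$ (i, j) =
    (if i < 2 * l \<and> j < 2 * l then (if i div 2 = j div 2 \<and> i \<noteq> j then 1 else 0)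
     else if i = j then (if i = 2 * l then 1 else -1) else 0)"
proof -
  have c: "(hyp_pow l :: 'a mat) \<in> carrier_mat (2 * l) (2 * l)" by (rule hyp_pow_carrier)
  have d: "(diag_lattice [1, -1] :: 'a mat) \<in> carrier_mat 2 2" unfolding diag_lattice_def carrier_mat_def by simp
  have e: "(Mn l :: 'a mat) $$ (i, j) =
     (if i < 2 * l then if j < 2 * l then hyp_pow l $$ (i, j) else 0
      else if j < 2 * l then 0 else diag_lattice [1, -1] $$ (i - 2 * l, j - 2 * l))"
    unfolding Mn_def orth_sum_def using assms c d by (subst index_mat_four_block) auto
  show ?thesis
  proof (cases "i < 2 * l \<and> j < 2 * l")
    case True then show ?thesis unfolding e using hyp_pow_entry[of i l j] by auto
  next
    case False
    show ?thesis
    proof (cases "i < 2 * l \<or> j < 2 * l")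
      case True then show ?thesis unfolding e using False by auto
    next
      case False
      then have "i - 2 * l = 0 \<or> i - 2 * l = 1" "j - 2 * l = 0 \<or> j - 2 * l = 1" using assms by auto
      then show ?thesis unfolding e using False dl by (elim disjE) auto
    qed
  qed
qed

definition pt :: "nat \<Rightarrow> nat" where "pt i = (if even i then i + 1 else i - 1)"

lemma pt_iff: assumes "i < 2 * l" shows "(j < 2 * l \<and> i div 2 = j div 2 \<and> i \<noteq> j) \<longleftrightarrow> j = pt i"
proof -
  obtain q r where i: "i = 2 * q + r" "r < 2" by (metis mod_less_divisor div_mult_mod_eq mult.commute zero_less_numeral)
  obtain q' r' where j: "j = 2 * q' + r'" "r' < 2" by (metis mod_less_divisor div_mult_mod_eq mult.commute zero_less_numeral)
  have r: "r = 0 \<or> r = 1" "r' = 0 \<or> r' = 1" using i j by auto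
  have "i div 2 = q" "j div 2 = q'" using i j by auto
  moreover have "q < l" using i assms by auto
  ultimately show ?thesis using r unfolding pt_def i(1) j(1) by (elim disjE) (auto, presburger+)
qed


lemma sum_pairs: "(\<Sum>i<2 * (l::nat). f i) = (\<Sum>p<l. f (2 * p) + f (2 * p + 1))"
proof (induct l)
  case 0 then show ?case by simp
next
  case (Suc l)
  have "(\<Sum>i<2 * Suc l. f i) = (\<Sum>i<2 * l. f i) + f (2 * l) + f (2 * l + 1)"
    by (simp add: algebra_simps)
  then show ?case using Suc by (simp add: algebra_simps)
qed



lemma Mn_bilin:
  fixes X :: "'a::comm_ring_1 mat"
  assumes X: "X \<in> carrier_mat (2 * l + 2) m" and a: "a < m" and b: "b < m"
  shows "(transpose_mat X * Mn l * X) $$ (a, b) =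
    (\<Sum>p<l. X $$ (2 * p, a) * X $$ (2 * p + 1, b) + X $$ (2 * p + 1, a) * X $$ (2 * p, b))
    + X $$ (2 * l, a) * X $$ (2 * l, b) - X $$ (2 * l + 1, a) * X $$ (2 * l + 1, b)"
proof -
  let ?N = "2 * l + 2"
  define c where "c i = (if i < 2 * l then X $$ (pt i, b) else if i = 2 * l then X $$ (2 * l, b) else - X $$ (2 * l + 1, b))" for i
  have inner: "(\<Sum>j<?N. X $$ (i, a) * Mn l $$ (i, j) * X $$ (j, b)) = X $$ (i, a) * c i" if i: "i < ?N" for i
  proof (cases "i < 2 * l")
    case True
    have "(\<Sum>j<?N. X $$ (i, a) * Mn l $$ (i, j) * X $$ (j, b)) = (\<Sum>j<?N. if j = pt i then X $$ (i, a) * X $$ (j, b) else 0)"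
    proof (rule sum.cong)
      fix j assume j: "j \<in> {..<?N}"
      have iff: "(j < 2 * l \<and> i div 2 = j div 2 \<and> i \<noteq> j) \<longleftrightarrow> j = pt i"
        using True by (rule pt_iff)
      have me: "(Mn l :: 'a mat) $$ (i, j) = (if j < 2 * l \<and> i div 2 = j div 2 \<and> i \<noteq> j then 1 else 0)"
        using Mn_entry[of i l j] True j by auto
      show "X $$ (i, a) * Mn l $$ (i, j) * X $$ (j, b) = (if j = pt i then X $$ (i, a) * X $$ (j, b) else 0)"
        unfolding me iff by simp
    qed simp
    also have "\<dots> = X $$ (i, a) * X $$ (pt i, b)"
    proof -
      have "pt i < ?N" using True unfolding pt_def by auto
      then show ?thesis by (simp add: sum.delta')
    qed
    finally show ?thesis using True unfolding c_def by simp
  next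
    case False
    have "(\<Sum>j<?N. X $$ (i, a) * Mn l $$ (i, j) * X $$ (j, b)) = (\<Sum>j<?N. if j = i then X $$ (i, a) * ((if i = 2 * l then 1 else -1) * X $$ (j, b)) else 0)"
    proof (rule sum.cong)
      fix j assume j: "j \<in> {..<?N}"
      have me: "(Mn l :: 'a mat) $$ (i, j) = (if i = j then (if i = 2 * l then 1 else -1) else 0)"
        using Mn_entry[of i l j] False i j by auto
      show "X $$ (i, a) * Mn l $$ (i, j) * X $$ (j, b) = (if j = i then X $$ (i, a) * ((if i = 2 * l then 1 else -1) * X $$ (j, b)) else 0)"
        unfolding me by auto
    qed simp
    also have "\<dots> = X $$ (i, a) * ((if i = 2 * l then 1 else -1) * X $$ (i, b))"
      using i by (simp add: sum.delta')
    also have "\<dots> = X $$ (i, a) * c i"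
    proof -
      have "i = 2 * l \<or> i = 2 * l + 1" using i False by auto
      then show ?thesis unfolding c_def by auto
    qed
    finally show ?thesis .
  qed
  have "(transpose_mat X * Mn l * X) $$ (a, b) = (\<Sum>i<?N. \<Sum>j<?N. X $$ (i, a) * Mn l $$ (i, j) * X $$ (j, b))"
    by (rule triple_entry[OF X Mn_carrier X a b])
  also have "\<dots> = (\<Sum>i<?N. X $$ (i, a) * c i)"
    by (rule sum.cong) (use inner in auto)
  also have "\<dots> = (\<Sum>i<2 * l. X $$ (i, a) * c i) + X $$ (2 * l, a) * c (2 * l) + X $$ (2 * l + 1, a) * c (2 * l + 1)"
    by (simp add: numeral_2_eq_2)
  also have "(\<Sum>i<2 * l. X $$ (i, a) * c i) = (\<Sum>p<l. X $$ (2 * p, a) * X $$ (2 * p + 1, b) + X $$ (2 * p + 1, a) * X $$ (2 * p, b))"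
    unfolding sum_pairs by (rule sum.cong) (auto simp: c_def pt_def)
  finally show ?thesis unfolding c_def by simp
qed


definition ppi :: "nat \<Rightarrow> nat \<Rightarrow> nat \<Rightarrow> nat \<Rightarrow> nat" where
  "ppi l r0 s0 i = (if i < l then 2 * i else if i = l then r0 else if i \<le> 2 * l then 2 * (i - l - 1) + 1
     else if i = 2 * l + 1 then s0 else i)"

lemma par1[simp]: "(2 * (a::nat) = 2 * b + 1) = False" by presburger
lemma par2[simp]: "(2 * (b::nat) + 1 = 2 * a) = False" by presburger
lemma par3[simp]: "(2 * (a::nat) = Suc (2 * b)) = False" by presburger
lemma par4[simp]: "(Suc (2 * (b::nat)) = 2 * a) = False" by presburger

definition ppinv :: "nat \<Rightarrow> nat \<Rightarrow> nat \<Rightarrow> nat" where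
  "ppinv l r0 v = (if v < 2 * l then (if even v then v div 2 else l + 1 + v div 2) else if v = r0 then l else 2 * l + 1)"

lemma ppi_inv:
  assumes rs: "(r0 = 2 * l \<and> s0 = 2 * l + 1) \<or> (r0 = 2 * l + 1 \<and> s0 = 2 * l)"
    and i: "i < 2 * l + 2"
  shows "ppinv l r0 (ppi l r0 s0 i) = i"
proof -
  consider "i < l" | "i = l" | "l < i \<and> i \<le> 2 * l" | "i = 2 * l + 1" using i by force
  then show ?thesis
  proof cases
    case 1 then show ?thesis unfolding ppi_def ppinv_def by simp
  next
    case 2 then show ?thesis using rs unfolding ppi_def ppinv_def by auto
  next
    case 3
    then have "ppi l r0 s0 i = 2 * (i - l - 1) + 1" unfolding ppi_def by simp
    moreover have "2 * (i - l - 1) + 1 < 2 * l" using 3 by arith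
    ultimately show ?thesis using 3 unfolding ppinv_def by simp
  next
    case 4 then show ?thesis using rs unfolding ppi_def ppinv_def by auto
  qed
qed

lemma ppi_inj:
  assumes rs: "(r0 = 2 * l \<and> s0 = 2 * l + 1) \<or> (r0 = 2 * l + 1 \<and> s0 = 2 * l)"
  shows "inj_on (ppi l r0 s0) {0..<2 * l + 2}"
  by (rule inj_on_inverseI[where g = "ppinv l r0"]) (use ppi_inv[OF rs] in auto)

lemma ppi_range:
  assumes rs: "(r0 = 2 * l \<and> s0 = 2 * l + 1) \<or> (r0 = 2 * l + 1 \<and> s0 = 2 * l)"
  shows "ppi l r0 s0 ` {0..<2 * l + 2} \<subseteq> {0..<2 * l + 2}"
  using rs unfolding ppi_def by auto

lemma ppi_permutes:
  assumes rs: "(r0 = 2 * l \<and> s0 = 2 * l + 1) \<or> (r0 = 2 * l + 1 \<and> s0 = 2 * l)"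
  shows "ppi l r0 s0 permutes {0..<2 * l + 2}"
proof (rule bij_imp_permutes)
  have "ppi l r0 s0 ` {0..<2 * l + 2} = {0..<2 * l + 2}"
    by (rule endo_inj_surj) (use ppi_inj[OF rs] ppi_range[OF rs] in auto)
  then show "bij_betw (ppi l r0 s0) {0..<2 * l + 2} {0..<2 * l + 2}"
    unfolding bij_betw_def using ppi_inj[OF rs] by auto
  show "x \<notin> {0..<2 * l + 2} \<Longrightarrow> ppi l r0 s0 x = x" for x unfolding ppi_def by auto
qed

lemma cases4: "(j::nat) < 2 * l + 2 \<Longrightarrow> j < l \<or> j = l \<or> (l < j \<and> j \<le> 2 * l) \<or> j = 2 * l + 1"
  by arith

definition Ymat :: "nat \<Rightarrow> nat \<Rightarrow> 'a::{zero,one} mat" where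
  "Ymat l s0 = mat (2 * l + 2) (l + 1) (\<lambda>(i, q). if q < l then (if i = 2 * q + 1 then 1 else 0) else if i = s0 then 1 else 0)"

lemma det_join:
  fixes X :: "'a::idom mat"
  assumes X: "X \<in> carrier_mat (2 * l + 2) (l + 1)"
    and Xe: "\<And>p b. p < l \<Longrightarrow> b < l + 1 \<Longrightarrow> X $$ (2 * p, b) = (if b = p then 1 else 0)"
    and rs: "(r0 = 2 * l \<and> s0 = 2 * l + 1) \<or> (r0 = 2 * l + 1 \<and> s0 = 2 * l)"
  shows "\<exists>\<sigma>. (\<sigma> = 1 \<or> \<sigma> = -1) \<and> det (join_cols X (Ymat l s0)) = \<sigma> * X $$ (r0, l)"
proof -
  let ?N = "2 * l + 2"
  let ?P = "join_cols X (Ymat l s0)"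
  let ?\<pi> = "ppi l r0 s0"
  have Pc: "?P \<in> carrier_mat ?N ?N" using X unfolding join_cols_def Ymat_def carrier_mat_def by simp
  have Pe: "?P $$ (i, j) = (if j < l + 1 then X $$ (i, j) else (if j - (l + 1) < l then (if i = 2 * (j - (l + 1)) + 1 then 1 else 0) else if i = s0 then 1 else 0))"
    if "i < ?N" "j < ?N" for i j
    using that X unfolding join_cols_def Ymat_def carrier_mat_def by auto
  define P' where "P' = mat ?N ?N (\<lambda>(i, j). ?P $$ (?\<pi> i, j))"
  have perm: "?\<pi> permutes {0..<?N}" by (rule ppi_permutes[OF rs])
  have d1: "det P' = signof ?\<pi> * det ?P" unfolding P'_def by (rule det_permute_rows[OF Pc perm])
  have pin: "?\<pi> i < ?N" if "i < ?N" for i using perm that by (meson atLeastLessThan_iff permutes_in_image zero_le)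
  have P'e: "P' $$ (i, j) = ?P $$ (?\<pi> i, j)" if "i < ?N" "j < ?N" for i j unfolding P'_def using that by simp
  have low: "P' $$ (i, j) = 0" if ij: "i < j" "j < ?N" for i j
  proof -
    have iN: "i < ?N" using ij by linarith
    have e: "P' $$ (i, j) = ?P $$ (?\<pi> i, j)" by (rule P'e[OF iN ij(2)])
    consider "j < l" | "j = l" | "l < j \<and> j \<le> 2 * l" | "j = 2 * l + 1" using cases4[OF ij(2)] by blast
    then show ?thesis
    proof cases
      case 1
      then have "?\<pi> i = 2 * i" "i < l" using ij unfolding ppi_def by auto
      then show ?thesis unfolding e using Pe[OF pin[OF iN] ij(2)] Xe[of i j] 1 ij by auto
    next
      case 2
      then have "?\<pi> i = 2 * i" "i < l" using ij unfolding ppi_def by auto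
      then show ?thesis unfolding e using Pe[OF pin[OF iN] ij(2)] Xe[of i j] 2 ij by auto
    next
      case 3
      have "?\<pi> i \<noteq> 2 * (j - (l + 1)) + 1"
      proof
        assume h: "?\<pi> i = 2 * (j - (l + 1)) + 1"
        have lt: "2 * (j - (l + 1)) + 1 < 2 * l" using 3 by arith
        have "i = ppinv l r0 (?\<pi> i)" using ppi_inv[OF rs iN] by simp
        also have "\<dots> = j" unfolding h ppinv_def using lt 3 by simp
        finally show False using ij by simp
      qed
      then show ?thesis unfolding e using Pe[OF pin[OF iN] ij(2)] 3 by auto
    next
      case 4
      have "?\<pi> i \<noteq> s0"
      proof
        assume h: "?\<pi> i = s0"
        have "i = ppinv l r0 (?\<pi> i)" using ppi_inv[OF rs iN] by simp
        also have "\<dots> = j" unfolding h ppinv_def using rs 4 by auto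
        finally show False using ij by simp
      qed
      then show ?thesis unfolding e using Pe[OF pin[OF iN] ij(2)] 4 by auto
    qed
  qed
  have diag: "P' $$ (i, i) = (if i = l then X $$ (r0, l) else 1)" if iN: "i < ?N" for i
  proof -
    have e: "P' $$ (i, i) = ?P $$ (?\<pi> i, i)" by (rule P'e[OF iN iN])
    consider "i < l" | "i = l" | "l < i \<and> i \<le> 2 * l" | "i = 2 * l + 1" using cases4[OF iN] by blast
    then show ?thesis
    proof cases
      case 1
      then have "?\<pi> i = 2 * i" unfolding ppi_def by auto
      then show ?thesis unfolding e using Pe[OF pin[OF iN] iN] Xe[of i i] 1 by auto
    next
      case 2
      then have "?\<pi> i = r0" unfolding ppi_def by auto
      then show ?thesis unfolding e using Pe[OF pin[OF iN] iN] 2 by auto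
    next
      case 3
      then have "?\<pi> i = 2 * (i - (l + 1)) + 1" unfolding ppi_def by auto
      then show ?thesis unfolding e using Pe[OF pin[OF iN] iN] 3 by auto
    next
      case 4
      then have "?\<pi> i = s0" unfolding ppi_def by auto
      then show ?thesis unfolding e using Pe[OF pin[OF iN] iN] 4 by auto
    qed
  qed
  have P'c: "P' \<in> carrier_mat ?N ?N" unfolding P'_def by simp
  have "det P' = prod_list (diag_mat P')" by (rule det_lower_triangular[OF low P'c])
  also have "\<dots> = (\<Prod>i = 0..<?N. P' $$ (i, i))" using P'c by (simp add: prod_list_diag_prod)
  also have "\<dots> = (\<Prod>i = 0..<?N. if i = l then X $$ (r0, l) else 1)"
    by (rule prod.cong) (auto simp: diag)
  also have "\<dots> = X $$ (r0, l)" by (simp add: prod.delta)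
  finally have dP': "det P' = X $$ (r0, l)" .
  have s: "signof ?\<pi> = (1::'a) \<or> signof ?\<pi> = (-1::'a)" by (simp add: sign_def)
  then have ss: "signof ?\<pi> * signof ?\<pi> = (1::'a)" by auto
  have "det ?P = signof ?\<pi> * X $$ (r0, l)"
  proof -
    have "signof ?\<pi> * det P' = (signof ?\<pi> * signof ?\<pi>) * det ?P" unfolding d1 by (simp only: mult.assoc)
    also have "\<dots> = det ?P" by (simp only: ss mult_1_left)
    finally have "signof ?\<pi> * det P' = det ?P" .
    then show ?thesis unfolding dP' by (rule sym)
  qed
  then show ?thesis using s by (intro exI[of _ "signof ?\<pi>"] conjI)
qed


context lf begin

lemma core:
  fixes G :: "'a mat"
  assumes frf: "finite_residue_field v"
    and c0: "c0 \<in> R" "c0 / 2 \<notin> R" "(c0 - 1) / 2 \<notin> R"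
    and G: "G \<in> carrier_mat (l + 1) (l + 1)" and sym: "transpose_mat G = G" and GR: "mat_over R G"
    and good: "G $$ (l, l) / 2 \<notin> R \<or> G $$ (l, l) / 4 \<in> R"
  shows "PR (Mn l) G"
proof -
  have Gs: "G $$ (a, b) = G $$ (b, a)" if "a < l + 1" "b < l + 1" for a b
  proof -
    have "transpose_mat G $$ (a, b) = G $$ (b, a)" using that G by simp
    then show ?thesis using sym by simp
  qed
  have GRe: "G $$ (a, b) \<in> R" if "a < l + 1" "b < l + 1" for a b
    using GR that G unfolding mat_over_def by auto
  obtain x0 y0 where xy: "x0 \<in> R" "y0 \<in> R" "x0^2 - y0^2 = G $$ (l, l)" "x0 / 2 \<notin> R \<or> y0 / 2 \<notin> R"
    using hyp_rep[OF frf c0 GRe[of l l] good] by auto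
  define r where "r a = (SOME r. r \<in> R \<and> (G $$ (a, a) - r^2) / 2 \<in> R)" for a
  have r: "r a \<in> R \<and> (G $$ (a, a) - (r a)^2) / 2 \<in> R" if "a < l + 1" for a
    unfolding r_def by (rule someI_ex) (use sqrt_mod2[OF frf GRe[OF that that]] in blast)
  define u where "u a = (if a < l then r a else x0)" for a
  define w where "w a = (if a < l then 0 else y0)" for a
  define G' where "G' a b = G $$ (a, b) - u a * u b + w a * w b" for a b
  define S where "S a b = (if a < b then G' a b else if a = b then G' a a / 2 else 0)" for a b
  define X where "X = mat (2 * l + 2) (l + 1) (\<lambda>(i, b). if i < 2 * l then (if even i then (if b = i div 2 then 1 else 0)
      else S (i div 2) b) else if i = 2 * l then u b else w b)"
  define r0 where "r0 = (if x0 / 2 \<notin> R then 2 * l else 2 * l + 1)"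
  define s0 where "s0 = (if x0 / 2 \<notin> R then 2 * l + 1 else 2 * l)"
  have uR: "u a \<in> R" if "a < l + 1" for a unfolding u_def using r[OF that] xy by auto
  have wR: "w a \<in> R" for a unfolding w_def using xy by auto
  have G'R: "G' a b \<in> R" if "a < l + 1" "b < l + 1" for a b
    unfolding G'_def using GRe[OF that] uR[OF that(1)] uR[OF that(2)] wR by (metis Radd Rdiff Rmult)
  have G's: "G' a b = G' b a" if "a < l + 1" "b < l + 1" for a b
    unfolding G'_def using Gs[OF that] by (simp add: mult.commute)
  have SR: "S a b \<in> R" if "a < l" "b < l + 1" for a b
  proof -
    have "G' a a / 2 = (G $$ (a, a) - (r a)^2) / 2" unfolding G'_def u_def w_def using that by (simp add: power2_eq_square)
    then have "G' a a / 2 \<in> R" using r[of a] that by simp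
    then show ?thesis unfolding S_def using G'R that by auto
  qed
  have Xc: "X \<in> carrier_mat (2 * l + 2) (l + 1)" unfolding X_def by simp
  have Xe: "X $$ (2 * p, b) = (if b = p then 1 else 0)" if "p < l" "b < l + 1" for p b
    unfolding X_def using that by simp
  have Xo: "X $$ (2 * p + 1, b) = S p b" if "p < l" "b < l + 1" for p b
    unfolding X_def using that by simp
  have Xu: "X $$ (2 * l, b) = u b" if "b < l + 1" for b unfolding X_def using that by simp
  have Xw: "X $$ (2 * l + 1, b) = w b" if "b < l + 1" for b unfolding X_def using that by simp
  have XR: "mat_over R X"
    unfolding mat_over_def
  proof (intro allI impI)
    fix i b assume i: "i < dim_row X" and b: "b < dim_col X"
    then have i': "i < 2 * l + 2" and b': "b < l + 1" using Xc by auto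
    have "i div 2 < l" if "i < 2 * l" using that by auto
    then show "X $$ (i, b) \<in> R" unfolding X_def using i' b' SR uR wR by auto
  qed
  have prod: "(transpose_mat X * Mn l * X) $$ (a, b) = G $$ (a, b)" if a: "a < l + 1" and b: "b < l + 1" for a b
  proof -
    have "(transpose_mat X * Mn l * X) $$ (a, b) =
      (\<Sum>p<l. X $$ (2 * p, a) * X $$ (2 * p + 1, b) + X $$ (2 * p + 1, a) * X $$ (2 * p, b))
      + X $$ (2 * l, a) * X $$ (2 * l, b) - X $$ (2 * l + 1, a) * X $$ (2 * l + 1, b)"
      by (rule Mn_bilin[OF Xc a b])
    also have "(\<Sum>p<l. X $$ (2 * p, a) * X $$ (2 * p + 1, b) + X $$ (2 * p + 1, a) * X $$ (2 * p, b))
        = (\<Sum>p<l. (if a = p then S p b else 0) + (if b = p then S p a else 0))"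
    proof (rule sum.cong)
      fix p assume "p \<in> {..<l}"
      then have p: "p < l" by simp
      show "X $$ (2 * p, a) * X $$ (2 * p + 1, b) + X $$ (2 * p + 1, a) * X $$ (2 * p, b)
        = (if a = p then S p b else 0) + (if b = p then S p a else 0)"
        unfolding Xe[OF p a] Xe[OF p b] Xo[OF p a] Xo[OF p b] by auto
    qed simp
    also have "\<dots> = (if a < l then S a b else 0) + (if b < l then S b a else 0)"
      by (simp add: sum.distrib sum.delta)
    also have "\<dots> = G' a b"
    proof -
      consider "a < b" | "b < a" | "a = b" "a < l" | "a = b" "a = l" using a b by linarith
      then show ?thesis
      proof cases
        case 1 then show ?thesis using b unfolding S_def by auto
      next
        case 2 then show ?thesis using a G's[OF a b] unfolding S_def by auto
      next
        case 3 then show ?thesis unfolding S_def by simp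
      next
        case 4
        have "G' l l = G $$ (l, l) - (x0^2 - y0^2)" unfolding G'_def u_def w_def by (simp add: power2_eq_square)
        then have "G' l l = 0" using xy(3) by simp
        then show ?thesis using 4 unfolding S_def by simp
      qed
    qed
    finally show ?thesis unfolding Xu[OF a] Xu[OF b] Xw[OF a] Xw[OF b] G'_def by simp
  qed
  have rs: "(r0 = 2 * l \<and> s0 = 2 * l + 1) \<or> (r0 = 2 * l + 1 \<and> s0 = 2 * l)"
    unfolding r0_def s0_def by auto
  obtain \<sigma> where \<sigma>: "\<sigma> = 1 \<or> \<sigma> = -1" "det (join_cols X (Ymat l s0)) = \<sigma> * X $$ (r0, l)"
    using det_join[OF Xc Xe rs] by blast
  define d where "d = X $$ (r0, l)"
  have d: "d \<in> R" "d / 2 \<notin> R"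
    unfolding d_def r0_def using Xu[of l] Xw[of l] xy unfolding u_def w_def by auto
  obtain id: "inverse d \<in> R" "d \<noteq> 0" using unitR[OF d] by blast
  have unit: "det (join_cols X (Ymat l s0)) * (\<sigma> * inverse d) = 1"
    using \<sigma> id unfolding d_def[symmetric] by auto
  have unitR': "\<sigma> * inverse d \<in> R" using \<sigma>(1) id by auto
  have Yc: "(Ymat l s0 :: 'a mat) \<in> carrier_mat (2 * l + 2) (l + 1)" unfolding Ymat_def by simp
  have YR: "mat_over R (Ymat l s0 :: 'a mat)" unfolding mat_over_def Ymat_def by auto
  have Mcc: "(Mn l :: 'a mat) \<in> carrier_mat (2 * l + 2) (2 * l + 2)" by (rule Mn_carrier)
  then have Mc: "dim_row (Mn l :: 'a mat) = 2 * l + 2" by simp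
  have "prim_represents R (Mn l) G X"
    unfolding prim_represents_def represents_def
  proof (intro conjI)
    show "X \<in> carrier_mat (dim_row (Mn l :: 'a mat)) (dim_row G)" using Xc Mc G by simp
    show "mat_over R X" by (rule XR)
    show "transpose_mat X * Mn l * X = G"
    proof (rule eq_matI)
      fix i j assume "i < dim_row G" "j < dim_col G"
      then show "(transpose_mat X * Mn l * X) $$ (i, j) = G $$ (i, j)" by (intro prod) (use G in auto)
    qed (use G Xc Mcc in auto)
    show "\<exists>Y. Y \<in> carrier_mat (dim_row (Mn l :: 'a mat)) (dim_row (Mn l :: 'a mat) - dim_row G) \<and> mat_over R Y \<and>
        (\<exists>u\<in>R. det (join_cols X Y) * u = 1)"
      by (rule exI[of _ "Ymat l s0"]) (use Yc YR unit unitR' Mc G in auto)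
  qed
  then show ?thesis unfolding PR_def by blast
qed

end

lemma congr_entry:
  fixes P G :: "'a::comm_ring_1 mat"
  assumes P: "P \<in> carrier_mat n n" and G: "G \<in> carrier_mat n n" and a: "a < n" and b: "b < n"
  shows "(transpose_mat P * G * P) $$ (a, b) = (\<Sum>c<n. P $$ (c, a) * (\<Sum>d<n. G $$ (c, d) * P $$ (d, b)))"
  unfolding triple_entry[OF P G P a b] by (simp add: sum_distrib_left mult.assoc)

definition shear :: "nat \<Rightarrow> nat \<Rightarrow> nat \<Rightarrow> 'a::comm_ring_1 \<Rightarrow> 'a mat" where
  "shear n i j t = mat n n (\<lambda>(c, a). if c = a then 1 else if c = j \<and> a = i then t else 0)"

lemma shear_col:
  fixes f :: "nat \<Rightarrow> 'a::comm_ring_1"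
  assumes ij: "i \<noteq> j" "i < n" "j < n" and b: "b < n"
  shows "(\<Sum>d<n. f d * shear n i j t $$ (d, b)) = f b + (if b = i then t * f j else 0)"
proof -
  have "(\<Sum>d<n. f d * shear n i j t $$ (d, b)) = (\<Sum>d<n. (if d = b then f d else 0) + (if b = i then (if d = j then t * f d else 0) else 0))"
    by (rule sum.cong) (use ij b in \<open>auto simp: shear_def\<close>)
  also have "\<dots> = f b + (if b = i then t * f j else 0)"
    using ij b by (simp add: sum.distrib sum.delta)
  finally show ?thesis .
qed

lemma shear_row:
  fixes f :: "nat \<Rightarrow> 'a::comm_ring_1"
  assumes ij: "i \<noteq> j" "i < n" "j < n" and b: "b < n"
  shows "(\<Sum>d<n. shear n i j t $$ (d, b) * f d) = f b + (if b = i then t * f j else 0)"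
  using shear_col[OF ij b, of f t] by (simp add: mult.commute)

lemma shear_carrier: "shear n i j t \<in> carrier_mat n n" unfolding shear_def by simp

lemma shear_inv:
  fixes t :: "'a::comm_ring_1"
  assumes ij: "i \<noteq> j" "i < n" "j < n"
  shows "shear n i j t * shear n i j (- t) = 1\<^sub>m n"
proof (rule eq_matI)
  fix c b assume c: "c < dim_row (1\<^sub>m n :: 'a mat)" and b: "b < dim_col (1\<^sub>m n :: 'a mat)"
  have cn: "c < n" and bn: "b < n" using c b by auto
  have "(shear n i j t * shear n i j (- t)) $$ (c, b) = (\<Sum>k<n. shear n i j t $$ (c, k) * shear n i j (- t) $$ (k, b))"
    using cn bn by (simp add: shear_def scalar_prod_def lessThan_atLeast0)
  also have "\<dots> = (\<Sum>k<n. shear n i j t $$ (c, k) * (if k = b then 1 else 0)) + (if b = i then - t * (shear n i j t $$ (c, j)) else 0)"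
  proof -
    have "shear n i j (- t) $$ (k, b) = (if k = b then 1 else 0) + (if b = i \<and> k = j then - t else 0)" if "k < n" for k
      using that bn ij unfolding shear_def by auto
    then have "(\<Sum>k<n. shear n i j t $$ (c, k) * shear n i j (- t) $$ (k, b))
       = (\<Sum>k<n. shear n i j t $$ (c, k) * (if k = b then 1 else 0) + (if b = i then (if k = j then - t * shear n i j t $$ (c, k) else 0) else 0))"
      by (intro sum.cong) (auto simp: algebra_simps)
    then show ?thesis using ij by (simp add: sum.distrib sum.delta)
  qed
  also have "\<dots> = shear n i j t $$ (c, b) + (if b = i then - t * (shear n i j t $$ (c, j)) else 0)"
    using bn by (simp add: sum.delta if_distrib[of "\<lambda>x. _ * x"] cong: if_cong)
  also have "\<dots> = 1\<^sub>m n $$ (c, b)" using cn bn ij unfolding shear_def by auto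
  finally show "(shear n i j t * shear n i j (- t)) $$ (c, b) = 1\<^sub>m n $$ (c, b)" .
qed (auto simp: shear_def)

lemma shear_entry:
  fixes G :: "'a::comm_ring_1 mat"
  assumes G: "G \<in> carrier_mat n n" and ij: "i \<noteq> j" "i < n" "j < n" and a: "a < n" and b: "b < n"
  shows "(transpose_mat (shear n i j t) * G * shear n i j t) $$ (a, b) =
    (G $$ (a, b) + (if b = i then t * G $$ (a, j) else 0))
    + (if a = i then t * (G $$ (j, b) + (if b = i then t * G $$ (j, j) else 0)) else 0)"
proof -
  have "(transpose_mat (shear n i j t) * G * shear n i j t) $$ (a, b) =
     (\<Sum>c<n. shear n i j t $$ (c, a) * (\<Sum>d<n. G $$ (c, d) * shear n i j t $$ (d, b)))"
    by (rule congr_entry[OF shear_carrier G a b])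
  also have "\<dots> = (\<Sum>c<n. shear n i j t $$ (c, a) * (G $$ (c, b) + (if b = i then t * G $$ (c, j) else 0)))"
  proof (rule sum.cong)
    fix c assume "c \<in> {..<n}"
    show "shear n i j t $$ (c, a) * (\<Sum>d<n. G $$ (c, d) * shear n i j t $$ (d, b)) =
      shear n i j t $$ (c, a) * (G $$ (c, b) + (if b = i then t * G $$ (c, j) else 0))"
      using shear_col[OF ij b, of "\<lambda>d. G $$ (c, d)" t] by simp
  qed simp
  also have "\<dots> = (G $$ (a, b) + (if b = i then t * G $$ (a, j) else 0))
    + (if a = i then t * (G $$ (j, b) + (if b = i then t * G $$ (j, j) else 0)) else 0)"
    by (rule shear_row[OF ij a])
  finally show ?thesis .
qed

definition swapm :: "nat \<Rightarrow> nat \<Rightarrow> nat \<Rightarrow> 'a::comm_ring_1 mat" where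
  "swapm n i l = mat n n (\<lambda>(c, a). if c = (if a = i then l else if a = l then i else a) then 1 else 0)"

lemma swapm_carrier: "swapm n i l \<in> carrier_mat n n" unfolding swapm_def by simp

lemma swapm_col:
  fixes f :: "nat \<Rightarrow> 'a::comm_ring_1"
  assumes il: "i < n" "l < n" and b: "b < n"
  shows "(\<Sum>d<n. f d * swapm n i l $$ (d, b)) = f (if b = i then l else if b = l then i else b)"
proof -
  let ?t = "if b = i then l else if b = l then i else b"
  have "?t < n" using il b by auto
  have "(\<Sum>d<n. f d * swapm n i l $$ (d, b)) = (\<Sum>d<n. if d = ?t then f d else 0)"
    by (rule sum.cong) (use il b in \<open>auto simp: swapm_def\<close>)
  also have "\<dots> = f ?t" using \<open>?t < n\<close> by (simp add: sum.delta)
  finally show ?thesis .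
qed

lemma swapm_inv:
  assumes il: "i < n" "l < n"
  shows "swapm n i l * swapm n i l = (1\<^sub>m n :: 'a::comm_ring_1 mat)"
proof (rule eq_matI)
  fix c b assume c: "c < dim_row (1\<^sub>m n :: 'a mat)" and b: "b < dim_col (1\<^sub>m n :: 'a mat)"
  have cn: "c < n" and bn: "b < n" using c b by auto
  have "(swapm n i l * swapm n i l) $$ (c, b) = (\<Sum>k<n. swapm n i l $$ (c, k) * swapm n i l $$ (k, b))"
    using cn bn by (simp add: swapm_def scalar_prod_def lessThan_atLeast0)
  also have "\<dots> = swapm n i l $$ (c, (if b = i then l else if b = l then i else b))"
    by (rule swapm_col[OF il bn])
  also have "\<dots> = (1\<^sub>m n :: 'a mat) $$ (c, b)" using cn bn il unfolding swapm_def by auto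
  finally show "(swapm n i l * swapm n i l) $$ (c, b) = (1\<^sub>m n :: 'a mat) $$ (c, b)" .
qed (auto simp: swapm_def)

lemma swapm_entry:
  fixes G :: "'a::comm_ring_1 mat"
  assumes G: "G \<in> carrier_mat n n" and il: "i < n" "l < n" and a: "a < n" and b: "b < n"
  shows "(transpose_mat (swapm n i l) * G * swapm n i l) $$ (a, b) =
     G $$ (if a = i then l else if a = l then i else a, if b = i then l else if b = l then i else b)"
proof -
  let ?ta = "if a = i then l else if a = l then i else a"
  have "(transpose_mat (swapm n i l) * G * swapm n i l) $$ (a, b) =
     (\<Sum>c<n. swapm n i l $$ (c, a) * (\<Sum>d<n. G $$ (c, d) * swapm n i l $$ (d, b)))"
    by (rule congr_entry[OF swapm_carrier G a b])
  also have "\<dots> = (\<Sum>c<n. (\<Sum>d<n. G $$ (c, d) * swapm n i l $$ (d, b)) * swapm n i l $$ (c, a))"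
    by (simp add: mult.commute)
  also have "\<dots> = (\<Sum>d<n. G $$ (?ta, d) * swapm n i l $$ (d, b))"
    by (rule swapm_col[OF il a])
  also have "\<dots> = G $$ (?ta, if b = i then l else if b = l then i else b)"
    by (rule swapm_col[OF il b])
  finally show ?thesis .
qed


context lf begin

lemma mat_over_transpose: "mat_over R A \<Longrightarrow> mat_over R (transpose_mat A)"
  unfolding mat_over_def by auto

lemma cong_ok:
  assumes G: "G \<in> carrier_mat n n" and sym: "transpose_mat G = G" and GR: "mat_over R G"
    and P: "P \<in> carrier_mat n n" and PR: "mat_over R P"
  shows "transpose_mat P * G * P \<in> carrier_mat n n" "transpose_mat (transpose_mat P * G * P) = transpose_mat P * G * P"
    "mat_over R (transpose_mat P * G * P)"
proof -
  show "transpose_mat P * G * P \<in> carrier_mat n n" using G P by simp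
  have "transpose_mat (transpose_mat P * G * P) = transpose_mat P * transpose_mat (transpose_mat P * G)"
    using G P by (subst transpose_mult[of _ n n _ n]) auto
  also have "transpose_mat (transpose_mat P * G) = transpose_mat G * P"
    using G P by (subst transpose_mult[of _ n n _ n]) auto
  also have "transpose_mat P * (transpose_mat G * P) = transpose_mat P * G * P"
    using G P sym by (subst assoc_mult_mat[of _ n n _ n _ n]) auto
  finally show "transpose_mat (transpose_mat P * G * P) = transpose_mat P * G * P" .
  show "mat_over R (transpose_mat P * G * P)"
    using G P GR PR mat_over_transpose by (intro mat_over_mult) auto
qed

definition goodv :: "'a \<Rightarrow> bool" where "goodv x \<longleftrightarrow> x / 2 \<notin> R \<or> x / 4 \<in> R"

lemma Mn_dim: "(Mn l :: 'a mat) \<in> carrier_mat (2 * l + 2) (2 * l + 2)" by (rule Mn_carrier)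

lemma mat_over_swapm: "mat_over R (swapm n i l :: 'a mat)" unfolding mat_over_def swapm_def by auto
lemma mat_over_shear: "t \<in> R \<Longrightarrow> mat_over R (shear n i j t :: 'a mat)" unfolding mat_over_def shear_def by auto

lemma PR_swap:
  assumes frf: "finite_residue_field v" and c0: "c0 \<in> R" "c0 / 2 \<notin> R" "(c0 - 1) / 2 \<notin> R"
    and G: "G \<in> carrier_mat (l + 1) (l + 1)" and sym: "transpose_mat G = G" and GR: "mat_over R G"
    and i: "i < l + 1" and good: "goodv (G $$ (i, i))"
  shows "PR (Mn l) G"
proof -
  let ?P = "swapm (l + 1) i l :: 'a mat"
  let ?G' = "transpose_mat ?P * G * ?P"
  note ok = cong_ok[OF G sym GR swapm_carrier mat_over_swapm]
  have e: "?G' $$ (l, l) = G $$ (i, i)"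
    using swapm_entry[OF G i, of l l l] by auto
  have "PR (Mn l) ?G'"
    by (rule core[OF frf c0 ok(1) ok(2) ok(3)]) (use good e in \<open>simp add: goodv_def\<close>)
  then show ?thesis
    by (intro PR_basis_change[OF Mn_dim G swapm_carrier swapm_carrier mat_over_swapm mat_over_swapm])
       (use swapm_inv[OF i, of l] in auto)
qed

lemma bad_unit: "x \<in> R \<Longrightarrow> \<not> goodv x \<Longrightarrow> x / 2 \<in> R \<and> (x / 2) / 2 \<notin> R"
  unfolding goodv_def by (simp add: divide_divide_eq_left)

lemma PR_offdiag:
  assumes frf: "finite_residue_field v" and c0: "c0 \<in> R" "c0 / 2 \<notin> R" "(c0 - 1) / 2 \<notin> R"
    and G: "G \<in> carrier_mat (l + 1) (l + 1)" and sym: "transpose_mat G = G" and GR: "mat_over R G"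
    and ij: "i < l + 1" "j < l + 1" "i \<noteq> j" and off: "G $$ (i, j) / 2 \<in> R"
  shows "PR (Mn l) G"
proof -
  have GRe: "G $$ (a, b) \<in> R" if "a < l + 1" "b < l + 1" for a b
    using GR that G unfolding mat_over_def by auto
  have Gs: "G $$ (a, b) = G $$ (b, a)" if "a < l + 1" "b < l + 1" for a b
  proof -
    have "transpose_mat G $$ (a, b) = G $$ (b, a)" using that G by simp
    then show ?thesis using sym by simp
  qed
  show ?thesis
  proof (cases "goodv (G $$ (i, i)) \<or> goodv (G $$ (j, j))")
    case True
    then show ?thesis using PR_swap[OF frf c0 G sym GR] ij by blast
  next
    case False
    define \<alpha> where "\<alpha> = G $$ (i, i) / 2"
    define \<beta> where "\<beta> = G $$ (j, j) / 2"
    define \<gamma> where "\<gamma> = G $$ (i, j) / 2"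
    have a: "\<alpha> \<in> R" "\<alpha> / 2 \<notin> R" using bad_unit[OF GRe[OF ij(1) ij(1)]] False unfolding \<alpha>_def by auto
    have b: "\<beta> \<in> R" "\<beta> / 2 \<notin> R" using bad_unit[OF GRe[OF ij(2) ij(2)]] False unfolding \<beta>_def by auto
    have g: "\<gamma> \<in> R" using off unfolding \<gamma>_def .
    obtain ib: "inverse \<beta> \<in> R" "\<beta> \<noteq> 0" using unitR[OF b] by blast
    obtain t where t: "t \<in> R" "(\<alpha> * inverse \<beta> - t^2) / 2 \<in> R"
      using sqrt_mod2[OF frf, of "\<alpha> * inverse \<beta>"] a ib by auto
    define e where "e = (\<alpha> * inverse \<beta> - t^2) / 2"
    have eR: "e \<in> R" using t(2) unfolding e_def .
    have ae: "\<alpha> = \<beta> * (2 * e + t^2)" unfolding e_def using ib by (simp add: field_simps)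
    let ?P = "shear (l + 1) i j t :: 'a mat"
    let ?G' = "transpose_mat ?P * G * ?P"
    note ok = cong_ok[OF G sym GR shear_carrier mat_over_shear[OF t(1)]]
    have "?G' $$ (i, i) = G $$ (i, i) + t * G $$ (i, j) + t * (G $$ (j, i) + t * G $$ (j, j))"
      using shear_entry[OF G ij(3) ij(1) ij(2) ij(1) ij(1), of t] by simp
    also have "\<dots> = 4 * (\<beta> * e + t^2 * \<beta> + t * \<gamma>)"
    proof -
      have Gii: "G $$ (i, i) = 2 * \<alpha>" unfolding \<alpha>_def by simp
      have Gjj: "G $$ (j, j) = 2 * \<beta>" unfolding \<beta>_def by simp
      have Gij: "G $$ (i, j) = 2 * \<gamma>" unfolding \<gamma>_def by simp
      have Gji: "G $$ (j, i) = 2 * \<gamma>" using Gs[OF ij(2) ij(1)] Gij by simp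
      show ?thesis unfolding Gii Gjj Gij Gji ae by (simp add: algebra_simps power2_eq_square)
    qed
    finally have h4: "?G' $$ (i, i) = 4 * (\<beta> * e + t^2 * \<beta> + t * \<gamma>)" .
    have "\<beta> * e + t^2 * \<beta> + t * \<gamma> \<in> R" using b eR t g by (metis Radd Rmult Rpow)
    moreover have "?G' $$ (i, i) / 4 = \<beta> * e + t^2 * \<beta> + t * \<gamma>"
      unfolding h4 by (rule nonzero_mult_div_cancel_left) simp
    ultimately have "?G' $$ (i, i) / 4 \<in> R" by (simp only:)
    then have "PR (Mn l) ?G'"
      by (intro PR_swap[OF frf c0 ok(1) ok(2) ok(3) ij(1)]) (simp add: goodv_def)
    then show ?thesis
      by (intro PR_basis_change[OF Mn_dim G shear_carrier shear_carrier mat_over_shear[OF t(1)] mat_over_shear[of "-t"]])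
         (use shear_inv[OF ij(3) ij(1) ij(2), of t] t in auto)
  qed
qed

lemma PR_all:
  assumes frf: "finite_residue_field v" and c0: "c0 \<in> R" "c0 / 2 \<notin> R" "(c0 - 1) / 2 \<notin> R"
    and G: "G \<in> carrier_mat (l + 1) (l + 1)" and sym: "transpose_mat G = G" and GR: "mat_over R G"
    and l: "2 \<le> l"
  shows "PR (Mn l) G"
proof -
  have GRe: "G $$ (a, b) \<in> R" if "a < l + 1" "b < l + 1" for a b
    using GR that G unfolding mat_over_def by auto
  show ?thesis
  proof (cases "\<exists>i j. i < l + 1 \<and> j < l + 1 \<and> i \<noteq> j \<and> G $$ (i, j) / 2 \<in> R")
    case True
    then obtain i j where "i < l + 1" "j < l + 1" "i \<noteq> j" "G $$ (i, j) / 2 \<in> R" by blast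
    then show ?thesis using PR_offdiag[OF frf c0 G sym GR] by blast
  next
    case False
    have i02: "(0::nat) < l + 1" "(2::nat) < l + 1" "(1::nat) < l + 1" using l by auto
    have ne: "(0::nat) \<noteq> 2" by simp
    have n02: "G $$ (0, 2) / 2 \<notin> R"
    proof
      assume h: "G $$ (0, 2) / 2 \<in> R"
      have "\<exists>i j. i < l + 1 \<and> j < l + 1 \<and> i \<noteq> j \<and> G $$ (i, j) / 2 \<in> R"
        by (intro exI[of _ 0] exI[of _ 2] conjI i02 ne h)
      with False show False by (rule notE)
    qed
    obtain ig: "inverse (G $$ (0, 2)) \<in> R" "G $$ (0, 2) \<noteq> 0" using unitR[OF GRe[OF i02(1) i02(2)] n02] by blast
    define t where "t = - (G $$ (0, 1) * inverse (G $$ (0, 2)))"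
    have tR: "t \<in> R" unfolding t_def using ig GRe[OF i02(1) i02(3)] by simp
    let ?P = "shear (l + 1) 1 2 t :: 'a mat"
    let ?G' = "transpose_mat ?P * G * ?P"
    note ok = cong_ok[OF G sym GR shear_carrier mat_over_shear[OF tR]]
    have "?G' $$ (0, 1) = G $$ (0, 1) + t * G $$ (0, 2)"
      using shear_entry[OF G _ i02(3) i02(2) i02(1) i02(3), of t] by simp
    also have "\<dots> = 0" unfolding t_def using ig by simp
    finally have "?G' $$ (0, 1) / 2 \<in> R" by simp
    then have "PR (Mn l) ?G'"
      by (intro PR_offdiag[OF frf c0 ok(1) ok(2) ok(3) i02(1) i02(3)]) auto
    then show ?thesis
      by (intro PR_basis_change[OF Mn_dim G shear_carrier shear_carrier mat_over_shear[OF tR] mat_over_shear[of "-t"]])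
         (use shear_inv[of 1 2 "l + 1" t] i02 tR in auto)
  qed
qed

end

lemma pigeon:
  fixes \<sigma> :: "nat \<Rightarrow> nat" and m n :: nat
  assumes s: "\<sigma> permutes {0..<m}" and nm: "n \<le> m" and m2: "m < 2 * n"
  shows "\<exists>i<n. \<sigma> i < n"
proof (rule ccontr)
  assume "\<not> ?thesis"
  then have ge: "\<forall>i<n. n \<le> \<sigma> i" by auto
  have inj: "inj_on \<sigma> {0..<n}" using permutes_inj[OF s] by (rule inj_on_subset) simp
  have "\<sigma> ` {0..<n} \<subseteq> {n..<m}"
  proof
    fix x assume "x \<in> \<sigma> ` {0..<n}"
    then obtain i where i: "i < n" "x = \<sigma> i" by auto
    have "\<sigma> i \<in> {0..<m}" using permutes_in_image[OF s] i nm by auto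
    then show "x \<in> {n..<m}" using ge i by auto
  qed
  then have "card (\<sigma> ` {0..<n}) \<le> card {n..<m}" by (intro card_mono) auto
  then have "n \<le> m - n" using card_image[OF inj] by simp
  then show False using m2 by simp
qed

context lf begin

lemma lower_bound:
  assumes n: "1 \<le> n" and H: "H \<in> carrier_mat m m" and pu: "prim_n_universal R n H"
  shows "2 * n \<le> m"
proof (rule ccontr)
  assume "\<not> 2 * n \<le> m"
  then have m2: "m < 2 * n" by simp
  have lg: "lattice_gram R m H" using pu H unfolding prim_n_universal_def by auto
  then have dH0: "det H \<noteq> 0" and HR: "mat_over R H" unfolding lattice_gram_def by auto
  have dHR: "det H \<in> R" by (rule det_R[OF HR])
  define c where "c = 2 * det H"
  have cR: "c \<in> R" unfolding c_def using dHR by simp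
  have c0: "c \<noteq> 0" unfolding c_def using dH0 by simp
  define G where "G = c \<cdot>\<^sub>m 1\<^sub>m n"
  have Gc: "G \<in> carrier_mat n n" unfolding G_def by simp
  have Ge: "G $$ (a, b) = (if a = b then c else 0)" if "a < n" "b < n" for a b
    unfolding G_def using that by simp
  have lgG: "lattice_gram R n G"
    unfolding lattice_gram_def
  proof (intro conjI)
    show "G \<in> carrier_mat n n" by (rule Gc)
    show "transpose_mat G = G" by (rule eq_matI) (auto simp: G_def)
    show "mat_over R G" unfolding mat_over_def G_def using cR by auto
    show "det G \<noteq> 0" unfolding G_def using c0 by simp
  qed
  obtain X where X: "prim_represents R H G X" using pu lgG unfolding prim_n_universal_def by blast
  have Xc: "X \<in> carrier_mat m n" and XR: "mat_over R X" and Xe: "transpose_mat X * H * X = G"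
    using X H Gc unfolding prim_represents_def represents_def by auto
  obtain Y u where Y: "Y \<in> carrier_mat m (m - n)" "mat_over R Y" and u: "u \<in> R" "det (join_cols X Y) * u = 1"
    using X H Gc unfolding prim_represents_def by auto
  show False
  proof (cases "m < n")
    case True
    have "dim_row (join_cols X Y) = m" "dim_col (join_cols X Y) = n"
      using Xc Y True unfolding join_cols_def by auto
    then have "det (join_cols X Y) = 0" unfolding det_def using True by simp
    then show False using u by simp
  next
    case False
    then have nm: "n \<le> m" by simp
    define P where "P = join_cols X Y"
    have Pc: "P \<in> carrier_mat m m" unfolding P_def using Xc Y nm unfolding join_cols_def by auto
    have PX: "P $$ (i, a) = X $$ (i, a)" if "i < m" "a < n" for i a
      unfolding P_def join_cols_def using that Xc Y by auto
    have PR: "mat_over R P" unfolding mat_over_def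
    proof (intro allI impI)
      fix i j assume "i < dim_row P" "j < dim_col P"
      then show "P $$ (i, j) \<in> R" unfolding P_def join_cols_def using XR Y Xc unfolding mat_over_def by auto
    qed
    define K where "K = transpose_mat P * H * P"
    have Kc: "K \<in> carrier_mat m m" unfolding K_def using Pc H by simp
    have KR: "mat_over R K" unfolding K_def using PR HR Pc H mat_over_transpose
      by (intro mat_over_mult) auto
    have Ke: "K $$ (a, b) = G $$ (a, b)" if a: "a < n" and b: "b < n" for a b
    proof -
      have "K $$ (a, b) = (\<Sum>i<m. \<Sum>j<m. P $$ (i, a) * H $$ (i, j) * P $$ (j, b))"
        unfolding K_def by (rule triple_entry[OF Pc H Pc]) (use a b nm in auto)
      also have "\<dots> = (\<Sum>i<m. \<Sum>j<m. X $$ (i, a) * H $$ (i, j) * X $$ (j, b))"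
        using PX a b by simp
      also have "\<dots> = (transpose_mat X * H * X) $$ (a, b)"
        by (rule triple_entry[symmetric, OF Xc H Xc a b])
      finally show ?thesis using Xe by simp
    qed
    have KRe: "K $$ (i, j) \<in> R" if "i < m" "j < m" for i j
      using KR Kc that unfolding mat_over_def by auto
    have trm: "(signof \<sigma> * (\<Prod>i = 0..<m. K $$ (i, \<sigma> i))) / c \<in> R" if s: "\<sigma> permutes {0..<m}" for \<sigma>
    proof -
      obtain i where i: "i < n" "\<sigma> i < n" using pigeon[OF s nm m2] by blast
      have si: "\<sigma> j < m" if "j < m" for j using permutes_in_image[OF s] that by auto
      have pe: "(\<Prod>j = 0..<m. K $$ (j, \<sigma> j)) = K $$ (i, \<sigma> i) * (\<Prod>j \<in> {0..<m} - {i}. K $$ (j, \<sigma> j))"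
        by (rule prod.remove) (use i nm in auto)
      have k1: "K $$ (i, \<sigma> i) / c \<in> R" using Ke[OF i] Ge[OF i] c0 by auto
      have k2: "(\<Prod>j \<in> {0..<m} - {i}. K $$ (j, \<sigma> j)) \<in> R" using KRe si by (intro Rprod) auto
      have k3: "signof \<sigma> \<in> R" by (simp add: sign_def)
      have in1: "signof \<sigma> * ((K $$ (i, \<sigma> i) / c) * (\<Prod>j \<in> {0..<m} - {i}. K $$ (j, \<sigma> j))) \<in> R"
        using k1 k2 k3 by (metis Rmult)
      have "(signof \<sigma> * (\<Prod>j = 0..<m. K $$ (j, \<sigma> j))) / c
         = signof \<sigma> * ((K $$ (i, \<sigma> i) / c) * (\<Prod>j \<in> {0..<m} - {i}. K $$ (j, \<sigma> j)))"
        unfolding pe by (simp add: algebra_simps)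
      then show ?thesis using in1 by (simp only:)
    qed
    have dK: "det K / c \<in> R"
    proof -
      have "det K / c = (\<Sum>\<sigma> \<in> {\<sigma>. \<sigma> permutes {0..<m}}. (signof \<sigma> * (\<Prod>i = 0..<m. K $$ (i, \<sigma> i))) / c)"
        unfolding det_def'[OF Kc] by (simp add: sum_divide_distrib)
      then show ?thesis using trm by (auto intro!: Rsum)
    qed
    have "det K = det P * (det H * det P)"
      unfolding K_def using Pc H
      by (simp add: det_mult[of _ m] det_transpose)
    moreover have "(det P * u) * (det P * u) = 1" using u unfolding P_def by simp
    ultimately have "det H = det K * (u * u)"
      by (metis (no_types, lifting) mult.assoc mult.commute mult_1_right)
    then have "det H / c = (det K / c) * (u * u)" by simp
    moreover have "(det K / c) * (u * u) \<in> R" using dK u by (metis Rmult)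
    ultimately have "det H / c \<in> R" by (simp only:)
    moreover have "det H / c = 1 / 2" unfolding c_def using dH0 by simp
    ultimately show False using half_not_R by simp
  qed
qed

end

lemma det_orth_sum:
  fixes A B :: "'a::idom mat"
  assumes A: "A \<in> carrier_mat a a" and B: "B \<in> carrier_mat b b"
  shows "det (orth_sum A B) = det A * det B"
proof -
  have d: "dim_row A = a" "dim_col A = a" "dim_row B = b" "dim_col B = b" using A B by auto
  show ?thesis unfolding orth_sum_def d
    by (rule det_four_block_mat_lower_left_zero[OF A _ _ B]) auto
qed

lemma det_hyp_plane: "det (hyp_plane :: 'a::idom mat) = -1"
proof -
  have "(hyp_plane :: 'a mat) = swaprows_mat 2 0 1"
  proof (rule eq_matI)
    fix i j assume "i < dim_row (swaprows_mat 2 0 1 :: 'a mat)" "j < dim_col (swaprows_mat 2 0 1 :: 'a mat)"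
    then have ij: "i < 2" "j < 2" by auto
    then have "i = 0 \<or> i = 1" "j = 0 \<or> j = 1" by auto
    then show "(hyp_plane :: 'a mat) $$ (i, j) = swaprows_mat 2 0 1 $$ (i, j)"
      using hp ij by (elim disjE) (auto simp: swaprows_mat_def)
  qed (auto simp: hyp_plane_def mat_of_rows_list_def numeral_2_eq_2)
  moreover have "det (swaprows_mat 2 0 1 :: 'a mat) = -1" by (rule det_swaprows_mat) auto
  ultimately show ?thesis by simp
qed

lemma det_dl: "det (diag_lattice [1, -1] :: 'a::idom mat) = -1"
proof -
  have "(diag_lattice [1, -1] :: 'a mat) = multrow_mat 2 1 (-1)"
  proof (rule eq_matI)
    fix i j assume "i < dim_row (multrow_mat 2 1 (-1) :: 'a mat)" "j < dim_col (multrow_mat 2 1 (-1) :: 'a mat)"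
    then have ij: "i < 2" "j < 2" by auto
    then have "i = 0 \<or> i = 1" "j = 0 \<or> j = 1" by auto
    then show "(diag_lattice [1, -1] :: 'a mat) $$ (i, j) = multrow_mat 2 1 (-1) $$ (i, j)"
      using dl ij by (elim disjE) (auto simp: multrow_mat_def)
  qed (auto simp: diag_lattice_def numeral_2_eq_2)
  moreover have "det (multrow_mat 2 1 (-1) :: 'a mat) = -1" by (rule det_multrow_mat) auto
  ultimately show ?thesis by simp
qed

lemma det_hyp_pow: "det (hyp_pow k :: 'a::idom mat) = (-1) ^ k"
proof (induct k)
  case 0 then show ?case by (simp add: hyp_pow_def)
next
  case (Suc k)
  show ?case unfolding hyp_pow_Suc
    by (subst det_orth_sum[OF hyp_plane_carrier hyp_pow_carrier]) (simp add: det_hyp_plane Suc)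
qed

lemma det_Mn: "det (Mn l :: 'a::idom mat) \<noteq> 0"
proof -
  have d: "(diag_lattice [1, -1] :: 'a mat) \<in> carrier_mat 2 2" unfolding diag_lattice_def carrier_mat_def by simp
  have "det (Mn l :: 'a mat) = (-1) ^ l * (-1)" unfolding Mn_def
    by (subst det_orth_sum[OF hyp_pow_carrier d]) (simp add: det_hyp_pow det_dl)
  then show ?thesis by simp
qed

context lf begin

lemma Mn_lattice: "lattice_gram R (2 * l + 2) (Mn l)"
  unfolding lattice_gram_def
proof (intro conjI)
  show "Mn l \<in> carrier_mat (2 * l + 2) (2 * l + 2)" by (rule Mn_carrier)
  show "transpose_mat (Mn l) = (Mn l :: 'a mat)"
  proof (rule eq_matI)
    fix i j assume "i < dim_row (Mn l :: 'a mat)" "j < dim_col (Mn l :: 'a mat)"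
    then have ij: "i < 2 * l + 2" "j < 2 * l + 2" using Mn_dim[of l] by auto
    show "transpose_mat (Mn l) $$ (i, j) = (Mn l :: 'a mat) $$ (i, j)"
      using ij Mn_dim[of l] Mn_entry[OF ij, where 'a='a] Mn_entry[OF ij(2) ij(1), where 'a='a] by auto
  qed (use Mn_dim[of l] in auto)
  show "mat_over R (Mn l :: 'a mat)" unfolding mat_over_def
  proof (intro allI impI)
    fix i j assume "i < dim_row (Mn l :: 'a mat)" "j < dim_col (Mn l :: 'a mat)"
    then have ij: "i < 2 * l + 2" "j < 2 * l + 2" using Mn_dim[of l] by auto
    show "(Mn l :: 'a mat) $$ (i, j) \<in> R" using Mn_entry[OF ij, where 'a='a] by auto
  qed
  show "det (Mn l :: 'a mat) \<noteq> 0" by (rule det_Mn)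
qed

end

theorem theorem5p3:
  fixes v :: "'a::field \<Rightarrow> int"
  assumes "nonarch_local_field v"
    and "(2::'a) \<noteq> 0"
    and "prime_elem_in (int_ring v) 2"
    and "\<not> ring_iso_Z2 (int_ring v)"
  shows "(\<forall>n::nat. n \<ge> 3 \<longrightarrow>
            prim_n_universal (int_ring v) n (orth_sum (hyp_pow (n - 1)) (diag_lattice [1, -1]))) \<and>
         (\<forall>n::nat. n \<ge> 3 \<longrightarrow> u_star (int_ring v) n = 2 * n)"
proof -
  have disc: "discrete_valuation v" and comp: "v_complete v" and frf: "finite_residue_field v"
    using assms(1) unfolding nonarch_local_field_def by auto
  interpret lf v using disc assms(2) assms(3) by unfold_locales
  obtain c0 where c0: "c0 \<in> R" "c0 / 2 \<notin> R" "(c0 - 1) / 2 \<notin> R"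
    using c0_exists[OF comp assms(4)] by blast
  have P1: "prim_n_universal R n (orth_sum (hyp_pow (n - 1)) (diag_lattice [1, -1]))" if n: "n \<ge> 3" for n
  proof -
    define l where "l = n - 1"
    have nl: "n = l + 1" and l2: "2 \<le> l" using n unfolding l_def by auto
    have e: "orth_sum (hyp_pow (n - 1)) (diag_lattice [1, -1]) = (Mn l :: 'a mat)"
      unfolding Mn_def l_def ..
    show ?thesis unfolding e prim_n_universal_def
    proof (intro conjI allI impI)
      show "lattice_gram R (dim_row (Mn l :: 'a mat)) (Mn l)" using Mn_lattice[of l] Mn_dim[of l] by simp
      fix G assume G: "lattice_gram R n G"
      then have Gc: "G \<in> carrier_mat (l + 1) (l + 1)" and sym: "transpose_mat G = G" and GR: "mat_over R G"
        unfolding lattice_gram_def nl by auto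
      have "PR (Mn l) G" by (rule PR_all[OF frf c0 Gc sym GR l2])
      then show "\<exists>X. prim_represents R (Mn l) G X" unfolding PR_def .
    qed
  qed
  have P2: "u_star R n = 2 * n" if n: "n \<ge> 3" for n
    unfolding u_star_def
  proof (rule Least_equality)
    show "\<exists>H. H \<in> carrier_mat (2 * n) (2 * n) \<and> prim_n_universal R n (H :: 'a mat)"
    proof (intro exI conjI)
      show "(orth_sum (hyp_pow (n - 1)) (diag_lattice [1, -1]) :: 'a mat) \<in> carrier_mat (2 * n) (2 * n)"
      proof -
        have "2 * (n - 1) + 2 = 2 * n" using n by simp
        then show ?thesis using Mn_dim[of "n - 1"] unfolding Mn_def by metis
      qed
      show "prim_n_universal R n (orth_sum (hyp_pow (n - 1)) (diag_lattice [1, -1]) :: 'a mat)"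
        by (rule P1[OF n])
    qed
    fix m assume "\<exists>H. H \<in> carrier_mat m m \<and> prim_n_universal R n (H :: 'a mat)"
    then obtain H :: "'a mat" where H: "H \<in> carrier_mat m m" "prim_n_universal R n H" by blast
    show "2 * n \<le> m" by (rule lower_bound[OF _ H]) (use n in simp)
  qed
  show ?thesis using P1 P2 by blast
qed


end
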